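(* Let $\gamma\in\mathcal{C}$ and let $\Omega$ be a direct split decomposition of $\gamma$. Then $\mathrm{rot}(\gamma)=\sum_{C\in\Omega}\mathrm{rot}(C)$.
   Context: A curve is a map $\gamma:[0,1]\to\mathbb{R}^2$ with $\gamma(0)=\gamma(1)$ (basepoint), regular and generic (finitely many self-intersections, each transverse double point); $\mathcal{C}$ is the set of such curves. $\mathrm{rot}(\gamma)$ is the Whitney index (winding number of $\gamma'$ about the origin). Direct split at self-intersection $v=\gamma(t)=\gamma(t^* )$, $t<t^*$: the closed curve $\gamma|_{[t,t^*]}$ based at $v$; complementary indirect split: $\gamma|_{[t^*,1]}$ followed by $\gamma|_{[0,t]}$, based at $\gamma(0)$ (both with the orientation of $\gamma$). A direct split decomposition of $\gamma$ is a sequence $\Omega=(\gamma_i)_{i=1}^k$ with $C_0=\gamma$, $\gamma_i$ a direct split of $C_{i-1}$, $C_i$ the complementary indirect split of $C_{i-1}$, and $\gamma_k=C_{k-1}$. *)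

theory Defs
  imports "HOL-Complex_Analysis.Winding_Numbers"
begin

definition piece_regular :: "(real \<Rightarrow> complex) \<Rightarrow> real \<Rightarrow> real \<Rightarrow> bool" where
  "piece_regular c a b \<longleftrightarrow> a < b \<and>
     (\<exists>D. continuous_on {a..b} D \<and>
        (\<forall>s\<in>{a..b}. (c has_vector_derivative D s) (at s within {a..b}) \<and> D s \<noteq> 0))"

definition pder :: "(real \<Rightarrow> complex) \<Rightarrow> real \<Rightarrow> real \<Rightarrow> real \<Rightarrow> complex" where
  "pder c a b s = vector_derivative c (at s within {a..b})"

definition valid_partition :: "(real \<Rightarrow> complex) \<Rightarrow> real list \<Rightarrow> bool" where
  "valid_partition c ps \<longleftrightarrow> 2 \<le> length ps \<and> hd ps = 0 \<and> last ps = 1 \<and>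
     sorted_wrt (<) ps \<and> (\<forall>i < length ps - 1. piece_regular c (ps!i) (ps!Suc i))"

text \<open>Total turning (in full turns) of a closed piecewise regular curve: the change of
  angle of the tangent along each piece (real part of the winding number of the derivative
  path about 0) plus the exterior angles (in (-pi,pi]) at the break points, the break point
  p_0 = 0 being compared with the incoming direction at p_n = 1.\<close>
definition turning :: "(real \<Rightarrow> complex) \<Rightarrow> real list \<Rightarrow> real" where
  "turning c ps =
     (let n = length ps - 1 in
      (\<Sum>i<n. Re (winding_number
                    (\<lambda>s. pder c (ps!i) (ps!Suc i) (ps!i + s * (ps!Suc i - ps!i))) 0))
    + (\<Sum>i<n. Arg (pder c (ps!i) (ps!Suc i) (ps!i) /
                    (if i = 0 then pder c (ps!(n-1)) (ps!n) (ps!n)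
                     else pder c (ps!(i-1)) (ps!i) (ps!i))) / (2 * pi)))"

text \<open>Rotation number (Whitney index); for a C^1 closed regular curve it is the winding
  number of the derivative about 0; for curves with corners the exterior angles are added.\<close>
definition rot :: "(real \<Rightarrow> complex) \<Rightarrow> real" where
  "rot c = turning c (SOME ps. valid_partition c ps)"

definition regular_closed :: "(real \<Rightarrow> complex) \<Rightarrow> bool" where
  "regular_closed \<gamma> \<longleftrightarrow> \<gamma> 0 = \<gamma> 1 \<and>
     (\<exists>D. continuous_on {0..1} D \<and>
        (\<forall>s\<in>{0..1}. (\<gamma> has_vector_derivative D s) (at s within {0..1}) \<and> D s \<noteq> 0) \<and>
        D 0 = D 1)"

definition generic :: "(real \<Rightarrow> complex) \<Rightarrow> bool" where
  "generic \<gamma> \<longleftrightarrow>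
     finite {\<gamma> t | t. t \<in> {0..<1} \<and> (\<exists>t'\<in>{0..<1}. t' \<noteq> t \<and> \<gamma> t' = \<gamma> t)} \<and>
     (\<forall>t1\<in>{0..<1}. \<forall>t2\<in>{0..<1}. \<forall>t3\<in>{0..<1}.
        \<gamma> t1 = \<gamma> t2 \<and> \<gamma> t2 = \<gamma> t3 \<longrightarrow> t1 = t2 \<or> t2 = t3 \<or> t1 = t3) \<and>
     (\<forall>t\<in>{0..<1}. \<forall>t'\<in>{0..<1}. t \<noteq> t' \<and> \<gamma> t = \<gamma> t' \<longrightarrow>
        Im (cnj (vector_derivative \<gamma> (at t within {0..1})) *
            vector_derivative \<gamma> (at t' within {0..1})) \<noteq> 0)"

definition curve_C :: "(real \<Rightarrow> complex) \<Rightarrow> bool" where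
  "curve_C \<gamma> \<longleftrightarrow> regular_closed \<gamma> \<and> generic \<gamma>"

definition self_int :: "(real \<Rightarrow> complex) \<Rightarrow> real \<Rightarrow> real \<Rightarrow> bool" where
  "self_int C t t' \<longleftrightarrow> 0 \<le> t \<and> t < t' \<and> t' \<le> 1 \<and> C t = C t' \<and> \<not> (t = 0 \<and> t' = 1)"

definition direct_split :: "(real \<Rightarrow> complex) \<Rightarrow> real \<Rightarrow> real \<Rightarrow> (real \<Rightarrow> complex)" where
  "direct_split C t t' = subpath t t' C"

definition indirect_split :: "(real \<Rightarrow> complex) \<Rightarrow> real \<Rightarrow> real \<Rightarrow> (real \<Rightarrow> complex)" where
  "indirect_split C t t' =
     (if t = 0 then subpath t' 1 C
      else if t' = 1 then subpath 0 t C
      else subpath 0 t C +++ subpath t' 1 C)"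

inductive dsd :: "(real \<Rightarrow> complex) \<Rightarrow> (real \<Rightarrow> complex) list \<Rightarrow> bool" where
  last: "dsd C [C]"
| step: "self_int C t t' \<Longrightarrow> dsd (indirect_split C t t') \<Omega> \<Longrightarrow>
           dsd C (direct_split C t t' # \<Omega>)"

end

theory Submission
  imports Defs "HOL-Complex_Analysis.Riemann_Mapping"
begin

definition WW :: "(real \<Rightarrow> complex) \<Rightarrow> real \<Rightarrow> real \<Rightarrow> real" where
  "WW c a b = Re (winding_number (\<lambda>s. pder c a b (a + s * (b - a))) 0)"

definition Rd :: "(real \<Rightarrow> complex) \<Rightarrow> real \<Rightarrow> complex" where
  "Rd c x = vector_derivative c (at_right x)"
definition Ld :: "(real \<Rightarrow> complex) \<Rightarrow> real \<Rightarrow> complex" where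
  "Ld c x = vector_derivative c (at_left x)"

definition FF :: "(real \<Rightarrow> complex) \<Rightarrow> real \<times> real \<Rightarrow> real \<times> real \<Rightarrow> real" where
  "FF c P Q = WW c (fst Q) (snd Q) + Arg (Rd c (fst Q) / Ld c (snd P)) / (2 * pi)"

fun ls :: "('a \<Rightarrow> 'a \<Rightarrow> real) \<Rightarrow> 'a list \<Rightarrow> real" where
  "ls F (x # y # r) = F x y + ls F (y # r)"
| "ls F _ = 0"

definition cs :: "('a \<Rightarrow> 'a \<Rightarrow> real) \<Rightarrow> 'a list \<Rightarrow> real" where
  "cs F L = F (last L) (hd L) + ls F L"

definition pcs :: "real list \<Rightarrow> (real \<times> real) list" where
  "pcs ps = zip ps (tl ps)"

lemma ls_sum: "ls F L = (\<Sum>i<length L - 1. F (L!i) (L!Suc i))"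
proof (induction F L rule: ls.induct)
  case (1 F x y r)
  then show ?case by (simp add: sum.lessThan_Suc_shift del: sum.lessThan_Suc)
qed auto

lemma ls_append: "X \<noteq> [] \<Longrightarrow> Y \<noteq> [] \<Longrightarrow> ls F (X @ Y) = ls F X + F (last X) (hd Y) + ls F Y"
proof (induction X rule: induct_list012)
  case (3 x y zs)
  then show ?case by simp
qed (auto simp: neq_Nil_conv)

lemma pcs_Cons2[simp]: "pcs (a # b # r) = (a, b) # pcs (b # r)"
  by (simp add: pcs_def)
lemma pcs_single[simp]: "pcs [a] = []" and pcs_Nil[simp]: "pcs [] = []"
  by (auto simp: pcs_def)

lemma pcs_append: "pcs (xs @ y # zs) = pcs (xs @ [y]) @ pcs (y # zs)"
proof (induction xs rule: induct_list012)
  case (2 x) then show ?case by (cases zs) auto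
next
  case (3 x1 x2 xs) then show ?case by simp
qed simp

lemma pcs_nth: "i < length ps - 1 \<Longrightarrow> pcs ps ! i = (ps!i, ps!Suc i)"
  by (simp add: pcs_def nth_tl)
lemma pcs_length[simp]: "length (pcs ps) = length ps - 1"
  by (simp add: pcs_def)

lemma pcs_map: "pcs (map h ps) = map (map_prod h h) (pcs ps)"
  by (induction ps rule: induct_list012) auto

lemma pder_right: "a < b \<Longrightarrow> pder c a b a = Rd c a"
  by (simp add: pder_def Rd_def at_within_Icc_at_right)
lemma pder_left: "a < b \<Longrightarrow> pder c a b b = Ld c b"
  by (simp add: pder_def Ld_def at_within_Icc_at_left)

lemma turning_cs:
  assumes "sorted_wrt (<) ps" "2 \<le> length ps"
  shows "turning c ps = cs (FF c) (pcs ps)"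
proof -
  define n where "n = length ps - 1"
  have n1: "1 \<le> n" using assms n_def by auto
  have lt: "\<And>i j. i < j \<Longrightarrow> j < length ps \<Longrightarrow> ps!i < ps!j"
    using assms(1) sorted_wrt_nth_less by blast
  define G where "G i = WW c (ps!i) (ps!Suc i) + Arg (Rd c (ps!i) / Ld c (if i = 0 then ps!n else ps!i)) / (2*pi)" for i
  have "turning c ps = (\<Sum>i<n. G i)"
  proof -
    have "turning c ps = (\<Sum>i<n. WW c (ps!i) (ps!Suc i)) + (\<Sum>i<n. Arg (Rd c (ps!i) / Ld c (if i = 0 then ps!n else ps!i)) / (2*pi))"
      unfolding turning_def Let_def n_def[symmetric] WW_def
    proof (intro arg_cong2[where f="(+)"] sum.cong refl)
      fix i assume i: "i \<in> {..<n}"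
      have a: "pder c (ps ! i) (ps ! Suc i) (ps ! i) = Rd c (ps!i)"
        using i lt n_def by (intro pder_right) auto
      have b: "(if i = 0 then pder c (ps ! (n - 1)) (ps ! n) (ps ! n)
             else pder c (ps ! (i - 1)) (ps ! i) (ps ! i)) = Ld c (if i = 0 then ps!n else ps!i)"
        using i lt n_def n1 by (auto intro!: pder_left)
      show "Arg (pder c (ps ! i) (ps ! Suc i) (ps ! i) /
             (if i = 0 then pder c (ps ! (n - 1)) (ps ! n) (ps ! n)
              else pder c (ps ! (i - 1)) (ps ! i) (ps ! i))) / (2 * pi) =
          Arg (Rd c (ps ! i) / Ld c (if i = 0 then ps ! n else ps ! i)) / (2 * pi)"
        by (simp only: a b)
    qed
    then show ?thesis by (simp add: G_def sum.distrib)
  qed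
  also have "\<dots> = G 0 + (\<Sum>i<n-1. G (Suc i))"
    using n1 by (metis Suc_diff_1 less_le_trans sum.lessThan_Suc_shift zero_less_one)
  also have "\<dots> = cs (FF c) (pcs ps)"
  proof -
    have L: "last (pcs ps) = (ps!(n-1), ps!n)" "hd (pcs ps) = (ps!0, ps!1)"
    proof -
      have ne: "pcs ps \<noteq> []" using n1 n_def by (metis length_0_conv pcs_length not_one_le_zero)
      show "last (pcs ps) = (ps!(n-1), ps!n)"
      proof -
        have "Suc (n-1) = n" using n1 by simp
        then show ?thesis using n1 n_def ne by (simp add: last_conv_nth pcs_nth)
      qed
      show "hd (pcs ps) = (ps!0, ps!1)"
        using n1 n_def ne by (simp add: hd_conv_nth pcs_nth)
    qed
    have "G 0 = FF c (last (pcs ps)) (hd (pcs ps))" by (simp add: L G_def FF_def)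
    moreover have "(\<Sum>i<n-1. G (Suc i)) = ls (FF c) (pcs ps)"
      unfolding ls_sum
      by (intro sum.cong) (auto simp: n_def pcs_nth G_def FF_def)
    ultimately show ?thesis by (simp add: cs_def)
  qed
  finally show ?thesis .
qed


lemma wn_scale:
  assumes g: "path g" "0 \<notin> path_image g" and r: "0 < r"
  shows "winding_number (\<lambda>s. complex_of_real r * g s) 0 = winding_number g 0"
proof -
  obtain q where q: "path q" "pathfinish q - pathstart q = 2 * of_real pi * \<i> * winding_number g 0"
      "\<And>t. t \<in> {0..1} \<Longrightarrow> g t = 0 + exp (q t)"
    using winding_number_as_continuous_log[OF g] by metis
  define q' where "q' t = q t + complex_of_real (ln r)" for t
  have pq': "path q'" unfolding q'_def using q(1) unfolding path_def by (intro continuous_intros) auto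
  have "winding_number (\<lambda>s. complex_of_real r * g s) 0 = winding_number (exp \<circ> q') 0"
  proof (rule winding_number_cong)
    fix t :: real assume "0 \<le> t" "t \<le> 1"
    then have "g t = exp (q t)" using q(3) by auto
    then show "complex_of_real r * g t = (exp \<circ> q') t"
      using r by (simp add: q'_def exp_add exp_of_real mult.commute)
  qed
  also have "\<dots> = (pathfinish q' - pathstart q') / (2 * of_real pi * \<i>)"
    by (rule winding_number_compose_exp[OF pq'])
  also have "\<dots> = winding_number g 0"
    using q(2) by (simp add: q'_def pathfinish_def pathstart_def)
  finally show ?thesis .
qed

lemma pr_D:
  assumes "piece_regular c a b"
  obtains D where "a < b" "continuous_on {a..b} D"
    "\<And>s. s \<in> {a..b} \<Longrightarrow> (c has_vector_derivative D s) (at s within {a..b})"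
    "\<And>s. s \<in> {a..b} \<Longrightarrow> D s \<noteq> 0"
    "\<And>s. s \<in> {a..b} \<Longrightarrow> pder c a b s = D s"
proof -
  from assms obtain D where ab: "a < b" and D: "continuous_on {a..b} D"
    "\<forall>s\<in>{a..b}. (c has_vector_derivative D s) (at s within {a..b}) \<and> D s \<noteq> 0"
    unfolding piece_regular_def by blast
  have "pder c a b s = D s" if "s \<in> {a..b}" for s
    using vector_derivative_within_cbox[of a b s c "D s"] D that ab by (simp add: pder_def)
  then show ?thesis using that ab D by blast
qed

lemma affine_in:
  fixes a b s :: real
  assumes "a \<le> b" "0 \<le> s" "s \<le> 1"
  shows "a + s * (b - a) \<in> {a..b}"
proof -
  have "s * (b - a) \<le> 1 * (b - a)" using assms by (intro mult_right_mono) auto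
  moreover have "0 \<le> s * (b - a)" using assms by simp
  ultimately show ?thesis by simp
qed

lemma pr_path:
  assumes "piece_regular c a b"
  shows "path (\<lambda>s. pder c a b (a + s * (b - a)))" "0 \<notin> path_image (\<lambda>s. pder c a b (a + s * (b - a)))"
proof -
  obtain D where D: "a < b" "continuous_on {a..b} D"
    "\<And>s. s \<in> {a..b} \<Longrightarrow> D s \<noteq> 0" "\<And>s. s \<in> {a..b} \<Longrightarrow> pder c a b s = D s"
    using pr_D[OF assms] by metis
  have m: "a + s * (b - a) \<in> {a..b}" if "s \<in> {0..1}" for s
    using that D(1) by (intro affine_in) auto
  have "path (\<lambda>s. D (a + s * (b - a)))"
    unfolding path_def
    by (rule continuous_on_compose2[OF D(2)]) (auto intro!: continuous_intros m)
  then show "path (\<lambda>s. pder c a b (a + s * (b - a)))"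
    unfolding path_def by (rule continuous_on_eq) (use D(4) m in auto)
  show "0 \<notin> path_image (\<lambda>s. pder c a b (a + s * (b - a)))"
    unfolding path_image_def using D(3,4) m by force
qed

lemma pr_sub:
  assumes "piece_regular c a b" "a \<le> a2" "a2 < b2" "b2 \<le> b"
  shows "piece_regular c a2 b2" "\<And>s. s \<in> {a2..b2} \<Longrightarrow> pder c a2 b2 s = pder c a b s"
proof -
  obtain D where D: "a < b" "continuous_on {a..b} D"
    "\<And>s. s \<in> {a..b} \<Longrightarrow> (c has_vector_derivative D s) (at s within {a..b})"
    "\<And>s. s \<in> {a..b} \<Longrightarrow> D s \<noteq> 0" "\<And>s. s \<in> {a..b} \<Longrightarrow> pder c a b s = D s"
    using pr_D[OF assms(1)] by metis
  have sub: "{a2..b2} \<subseteq> {a..b}" using assms by auto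
  have d2: "(c has_vector_derivative D s) (at s within {a2..b2})" if "s \<in> {a2..b2}" for s
    using has_vector_derivative_within_subset[OF D(3) sub] that sub by blast
  show "piece_regular c a2 b2" unfolding piece_regular_def
    using assms(3) continuous_on_subset[OF D(2) sub] d2 D(4) sub by blast
  fix s assume s: "s \<in> {a2..b2}"
  then show "pder c a2 b2 s = pder c a b s"
    using vector_derivative_within_cbox[of a2 b2 s c "D s"] d2[OF s] assms(3) D(5) sub
    by (auto simp: pder_def)
qed

lemma WW_add:
  assumes pr: "piece_regular c a b" and m: "a < m" "m < b"
  shows "WW c a b = WW c a m + WW c m b"
proof -
  define g where "g = (\<lambda>s. pder c a b (a + s * (b - a)))"
  have ab: "a < b" using m by simp
  note P = pr_path[OF pr, folded g_def]
  define u where "u = (m - a) / (b - a)"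
  have u: "0 \<le> u" "u \<le> 1" using m by (auto simp: u_def)
  have "winding_number (subpath 0 u g) 0 + winding_number (subpath u 1 g) 0 = winding_number (subpath 0 1 g) 0"
    using winding_number_subpath_combine[OF P, of 0 u 1] u by simp
  moreover have "subpath 0 1 g = g" by (simp add: subpath_def)
  moreover have "winding_number (subpath 0 u g) 0 = winding_number (\<lambda>s. pder c a m (a + s * (m - a))) 0"
  proof (rule winding_number_cong)
    fix s :: real assume s: "0 \<le> s" "s \<le> 1"
    have e: "a + ((u - 0) * s + 0) * (b - a) = a + s * (m - a)" using ab by (simp add: u_def field_simps)
    have "a + s * (m - a) \<in> {a..m}" using s m by (intro affine_in) auto
    then show "subpath 0 u g s = pder c a m (a + s * (m - a))"
      unfolding subpath_def g_def e using pr_sub(2)[OF pr _ m(1)] m by simp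
  qed
  moreover have "winding_number (subpath u 1 g) 0 = winding_number (\<lambda>s. pder c m b (m + s * (b - m))) 0"
  proof (rule winding_number_cong)
    fix s :: real assume s: "0 \<le> s" "s \<le> 1"
    have u1: "u * (b - a) = m - a" using ab by (simp add: u_def)
    have "a + ((1 - u) * s + u) * (b - a) = a + s * (b - a) - s * (u * (b - a)) + u * (b - a)"
      by (simp add: algebra_simps)
    then have e: "a + ((1 - u) * s + u) * (b - a) = m + s * (b - m)" unfolding u1 by (simp add: algebra_simps)
    have "m + s * (b - m) \<in> {m..b}" using s m by (intro affine_in) auto
    then show "subpath u 1 g s = pder c m b (m + s * (b - m))"
      unfolding subpath_def g_def e using pr_sub(2)[OF pr _ m(2)] m by simp
  qed
  ultimately show ?thesis unfolding WW_def g_def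
    by (metis plus_complex.sel(1))
qed


lemma vd_affine_within:
  assumes ab: "a' < b'" and bp: "0 < \<beta>" and fc: "\<forall>y\<in>{a'..b'}. f y = c (a + \<beta> * (y - a'))"
    and y: "y \<in> {a'..b'}"
    and D: "(c has_vector_derivative D) (at (a + \<beta> * (y - a')) within {a..a + \<beta> * (b' - a')})"
  shows "(f has_vector_derivative (\<beta> *\<^sub>R D)) (at y within {a'..b'})"
proof -
  define g where "g y = \<beta> * y + (a - \<beta> * a')" for y
  have geq: "g y = a + \<beta> * (y - a')" for y by (simp add: g_def algebra_simps)
  have gd: "(g has_vector_derivative \<beta>) (at y within {a'..b'})"
    unfolding g_def has_real_derivative_iff_has_vector_derivative[symmetric]
    by (auto intro!: derivative_eq_intros)
  have img: "g ` {a'..b'} = {a..a + \<beta> * (b' - a')}"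
  proof -
    have e: "\<beta> * a' + (a - \<beta> * a') = a" "\<beta> * b' + (a - \<beta> * a') = a + \<beta> * (b' - a')"
      by (simp_all add: right_diff_distrib)
    have ne: "{a'..b'} \<noteq> {}" using ab by simp
    show ?thesis unfolding g_def image_affinity_atLeastAtMost using ne bp by (simp only: e if_False if_True less_imp_le)
  qed
  have "((c \<circ> g) has_vector_derivative (\<beta> *\<^sub>R D)) (at y within {a'..b'})"
    by (rule vector_diff_chain_within[OF gd]) (use D in \<open>unfold img, simp add: geq\<close>)
  then show ?thesis
  proof (rule has_vector_derivative_transform[OF y, rotated])
    fix x assume "x \<in> {a'..b'}"
    then have "f x = c (a + \<beta> * (x - a'))" using fc by blast
    then show "f x = (c \<circ> g) x" by (simp only: o_def geq)
  qed
qed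

definition corr :: "(real \<Rightarrow> complex) \<Rightarrow> (real \<Rightarrow> complex) \<Rightarrow> real \<Rightarrow> real \<Rightarrow> real \<Rightarrow> real \<Rightarrow> bool" where
  "corr f c a' b' a b \<longleftrightarrow> a' < b' \<and> a < b \<and> (\<forall>y\<in>{a'..b'}. f y = c (a + ((b - a) / (b' - a')) * (y - a')))"

lemma corr_main:
  assumes co: "corr f c a' b' a b" and pr: "piece_regular c a b"
  defines "\<beta> \<equiv> (b - a) / (b' - a')"
  shows "piece_regular f a' b'" "WW f a' b' = WW c a b"
    "Rd f a' = complex_of_real \<beta> * Rd c a" "Ld f b' = complex_of_real \<beta> * Ld c b"
proof -
  have ab': "a' < b'" and ab: "a < b" and fc: "\<forall>y\<in>{a'..b'}. f y = c (a + \<beta> * (y - a'))"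
    using co by (auto simp: corr_def \<beta>_def)
  have bp: "0 < \<beta>" using ab ab' by (simp add: \<beta>_def)
  have bb: "a + \<beta> * (b' - a') = b" using ab' by (simp add: \<beta>_def)
  obtain D where D: "continuous_on {a..b} D"
    "\<And>s. s \<in> {a..b} \<Longrightarrow> (c has_vector_derivative D s) (at s within {a..b})"
    "\<And>s. s \<in> {a..b} \<Longrightarrow> D s \<noteq> 0" "\<And>s. s \<in> {a..b} \<Longrightarrow> pder c a b s = D s"
    using pr_D[OF pr] by metis
  have gin: "a + \<beta> * (y - a') \<in> {a..b}" if "y \<in> {a'..b'}" for y
  proof -
    have "\<beta> * (y - a') \<le> \<beta> * (b' - a')" using that bp by (intro mult_left_mono) auto
    then show ?thesis using that bp bb by auto
  qed
  have fd: "(f has_vector_derivative (\<beta> *\<^sub>R D (a + \<beta> * (y - a')))) (at y within {a'..b'})"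
    if "y \<in> {a'..b'}" for y
    using vd_affine_within[OF ab' bp fc that] D(2)[OF gin[OF that]] bb by simp
  have cD': "continuous_on {a'..b'} (\<lambda>y. \<beta> *\<^sub>R D (a + \<beta> * (y - a')))"
    by (intro continuous_intros continuous_on_compose2[OF D(1)]) (auto intro: gin)
  show prF: "piece_regular f a' b'"
    unfolding piece_regular_def
  proof (intro conjI exI[of _ "\<lambda>y. \<beta> *\<^sub>R D (a + \<beta> * (y - a'))"] ballI)
    show "a' < b'" by (rule ab')
    show "continuous_on {a'..b'} (\<lambda>y. \<beta> *\<^sub>R D (a + \<beta> * (y - a')))" by (rule cD')
    fix s assume s: "s \<in> {a'..b'}"
    show "(f has_vector_derivative \<beta> *\<^sub>R D (a + \<beta> * (s - a'))) (at s within {a'..b'})"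
      by (rule fd[OF s])
    show "\<beta> *\<^sub>R D (a + \<beta> * (s - a')) \<noteq> 0" using D(3)[OF gin[OF s]] bp by simp
  qed
  have pf: "pder f a' b' y = complex_of_real \<beta> * pder c a b (a + \<beta> * (y - a'))" if "y \<in> {a'..b'}" for y
    using vector_derivative_within_cbox[of a' b' y f] fd[OF that] ab' that D(4)[OF gin[OF that]]
    by (simp add: pder_def scaleR_conv_of_real)
  show "Rd f a' = complex_of_real \<beta> * Rd c a"
    using pf[of a'] ab' ab by (simp add: pder_right)
  show "Ld f b' = complex_of_real \<beta> * Ld c b"
    using pf[of b'] ab' ab bb by (simp add: pder_left)
  have "winding_number (\<lambda>s. pder f a' b' (a' + s * (b' - a'))) 0
      = winding_number (\<lambda>s. complex_of_real \<beta> * pder c a b (a + s * (b - a))) 0"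
  proof (rule winding_number_cong)
    fix s :: real assume s: "0 \<le> s" "s \<le> 1"
    have "a' + s * (b' - a') \<in> {a'..b'}" using s ab' by (intro affine_in) auto
    moreover have "a + \<beta> * (a' + s * (b' - a') - a') = a + s * (b - a)"
      using ab' by (simp add: \<beta>_def field_simps)
    ultimately show "pder f a' b' (a' + s * (b' - a')) = complex_of_real \<beta> * pder c a b (a + s * (b - a))"
      using pf by metis
  qed
  also have "\<dots> = winding_number (\<lambda>s. pder c a b (a + s * (b - a))) 0"
    using wn_scale[OF pr_path[OF pr] bp] .
  finally show "WW f a' b' = WW c a b" by (simp add: WW_def)
qed

lemma corr_FF:
  assumes "corr f c (fst P') (snd P') (fst P) (snd P)" "piece_regular c (fst P) (snd P)"
    "corr f c (fst Q') (snd Q') (fst Q) (snd Q)" "piece_regular c (fst Q) (snd Q)"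
  shows "FF f P' Q' = FF c P Q"
proof -
  note p = corr_main[OF assms(1,2)] and q = corr_main[OF assms(3,4)]
  have pos: "0 < (snd P - fst P) / (snd P' - fst P')" "0 < (snd Q - fst Q) / (snd Q' - fst Q')"
    using assms(1,3) by (auto simp: corr_def)
  define r1 where "r1 = (snd Q - fst Q) / (snd Q' - fst Q')"
  define r2 where "r2 = (snd P - fst P) / (snd P' - fst P')"
  have r0: "0 < r1" "0 < r2" using pos by (auto simp: r1_def r2_def)
  have "Rd f (fst Q') / Ld f (snd P') = complex_of_real (r1 / r2) * (Rd c (fst Q) / Ld c (snd P))"
    using p(4) q(3) r0 by (simp add: r1_def[symmetric] r2_def[symmetric])
  then have "Arg (Rd f (fst Q') / Ld f (snd P')) = Arg (Rd c (fst Q) / Ld c (snd P))"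
    using r0 Arg_times_of_real[of "r1/r2" "Rd c (fst Q) / Ld c (snd P)"] by (simp add: field_simps)
  then show ?thesis using q(2) by (simp add: FF_def)
qed


lemma valid_pcs:
  "valid_partition c ps \<longleftrightarrow> 2 \<le> length ps \<and> hd ps = 0 \<and> last ps = 1 \<and> sorted_wrt (<) ps \<and>
     (\<forall>P\<in>set (pcs ps). piece_regular c (fst P) (snd P))"
proof -
  have "(\<forall>i < length ps - 1. piece_regular c (ps!i) (ps!Suc i)) \<longleftrightarrow>
        (\<forall>P\<in>set (pcs ps). piece_regular c (fst P) (snd P))"
  proof
    assume h: "\<forall>i < length ps - 1. piece_regular c (ps!i) (ps!Suc i)"
    show "\<forall>P\<in>set (pcs ps). piece_regular c (fst P) (snd P)"
    proof
      fix P assume "P \<in> set (pcs ps)"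
      then obtain i where "i < length ps - 1" "P = pcs ps ! i" by (auto simp: in_set_conv_nth)
      then show "piece_regular c (fst P) (snd P)" using h by (simp add: pcs_nth)
    qed
  next
    assume h: "\<forall>P\<in>set (pcs ps). piece_regular c (fst P) (snd P)"
    show "\<forall>i < length ps - 1. piece_regular c (ps!i) (ps!Suc i)"
    proof (intro allI impI)
      fix i assume i: "i < length ps - 1"
      then have "pcs ps ! i \<in> set (pcs ps)" by (intro nth_mem) simp
      then show "piece_regular c (ps!i) (ps!Suc i)" using h i by (auto simp: pcs_nth)
    qed
  qed
  then show ?thesis unfolding valid_partition_def by blast
qed

lemma ls_Cons: "ls F (x # V) = (if V = [] then 0 else F x (hd V) + ls F V)"
  by (cases V) auto

lemma cs_refine:
  assumes h1: "\<And>X. F X P1 + F P1 P2 = F X P" and h2: "\<And>Y. F P2 Y = F P Y"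
  shows "cs F (U @ P1 # P2 # V) = cs F (U @ P # V)"
proof (cases "U = []")
  case True
  then show ?thesis
    using h1[of P] h1[of "last V"] h2[of P1] h2[of "hd V"]
    by (cases "V = []") (auto simp: cs_def ls_Cons)
next
  case False
  have a: "ls F (U @ P1 # P2 # V) = ls F U + F (last U) P1 + ls F (P1 # P2 # V)"
    using ls_append[OF False, of "P1 # P2 # V"] by simp
  have b: "ls F (U @ P # V) = ls F U + F (last U) P + ls F (P # V)"
    using ls_append[OF False, of "P # V"] by simp
  show ?thesis
  proof (cases "V = []")
    case True
    have a': "ls F (U @ [P1, P2]) = ls F U + F (last U) P1 + F P1 P2"
      using ls_append[OF False, of "[P1, P2]"] by simp
    have b': "ls F (U @ [P]) = ls F U + F (last U) P"
      using ls_append[OF False, of "[P]"] by simp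
    show ?thesis using True False h1[of "last U"] h2[of "hd U"] by (simp add: cs_def a' b')
  next
    case VF: False
    show ?thesis using VF False h1[of "last U"] h2[of "hd U"] h2[of "hd V"]
      by (simp add: cs_def a b ls_Cons)
  qed
qed

lemma insert_point:
  assumes v: "valid_partition c (xs @ a # b # ys)" and m: "a < m" "m < b"
  shows "valid_partition c (xs @ a # m # b # ys)"
    "turning c (xs @ a # m # b # ys) = turning c (xs @ a # b # ys)"
proof -
  have pp: "pcs (xs @ a # b # ys) = pcs (xs @ [a]) @ (a, b) # pcs (b # ys)"
    using pcs_append[of xs a "b # ys"] by simp
  have pq: "pcs (xs @ a # m # b # ys) = pcs (xs @ [a]) @ (a, m) # (m, b) # pcs (b # ys)"
    using pcs_append[of xs a "m # b # ys"] by simp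
  have V: "2 \<le> length (xs @ a # b # ys)" "hd (xs @ a # b # ys) = 0" "last (xs @ a # b # ys) = 1"
     "sorted_wrt (<) (xs @ a # b # ys)" "\<forall>P\<in>set (pcs (xs @ a # b # ys)). piece_regular c (fst P) (snd P)"
    using v unfolding valid_pcs by auto
  have prab: "piece_regular c a b" using V(5) pp by auto
  have pram: "piece_regular c a m" "piece_regular c m b"
    using pr_sub(1)[OF prab, of a m] pr_sub(1)[OF prab, of m b] m by auto
  have hd: "hd (xs @ a # m # b # ys) = 0" using V(2) by (cases xs) auto
  have lst: "last (xs @ a # m # b # ys) = 1" using V(3) by simp
  have srt: "sorted_wrt (<) (xs @ a # m # b # ys)"
    using V(4) m by (auto simp: sorted_wrt_append)
  show v2: "valid_partition c (xs @ a # m # b # ys)"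
    unfolding valid_pcs using hd lst srt V(5) pram by (auto simp: pq pp)
  obtain D where D: "a < b" "\<And>s. s \<in> {a..b} \<Longrightarrow> (c has_vector_derivative D s) (at s within {a..b})"
    "\<And>s. s \<in> {a..b} \<Longrightarrow> D s \<noteq> 0"
    using pr_D[OF prab] by metis
  have Dm: "(c has_vector_derivative D m) (at m within {a..b})" "D m \<noteq> 0" using D m by auto
  have "Rd c m = D m"
  proof -
    have "(c has_vector_derivative D m) (at m within {m..b})"
      using has_vector_derivative_within_subset[OF Dm(1)] m by auto
    then show ?thesis unfolding Rd_def
      using vector_derivative_within_cbox[of m b m c "D m"] m by (simp add: at_within_Icc_at_right)
  qed
  moreover have "Ld c m = D m"
  proof -
    have "(c has_vector_derivative D m) (at m within {a..m})"
      using has_vector_derivative_within_subset[OF Dm(1)] m by auto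
    then show ?thesis unfolding Ld_def
      using vector_derivative_within_cbox[of a m m c "D m"] m by (simp add: at_within_Icc_at_left)
  qed
  ultimately have arg0: "Arg (Rd c m / Ld c m) = 0" using Dm(2) by simp
  have W: "WW c a b = WW c a m + WW c m b" by (rule WW_add[OF prab m])
  have "cs (FF c) (pcs (xs @ [a]) @ (a, m) # (m, b) # pcs (b # ys)) = cs (FF c) (pcs (xs @ [a]) @ (a, b) # pcs (b # ys))"
    by (rule cs_refine) (auto simp: FF_def W arg0)
  then show "turning c (xs @ a # m # b # ys) = turning c (xs @ a # b # ys)"
    using turning_cs[OF srt] turning_cs[OF V(4)] by (simp add: pp pq)
qed

lemma split_sorted:
  fixes ps :: "real list"
  assumes "sorted_wrt (<) ps" "ps \<noteq> []" "hd ps < x" "x < last ps" "x \<notin> set ps"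
  shows "\<exists>xs a b ys. ps = xs @ a # b # ys \<and> a < x \<and> x < b"
  using assms
proof (induction ps)
  case Nil then show ?case by simp
next
  case (Cons p r)
  then have rne: "r \<noteq> []" by auto
  show ?case
  proof (cases "x < hd r")
    case True
    then have "p # r = [] @ p # hd r # tl r" using rne by simp
    moreover have "p < x" using Cons.prems by simp
    ultimately show ?thesis using True by blast
  next
    case False
    then have "hd r < x" using Cons.prems rne by (metis hd_in_set list.set_intros(2) not_less_iff_gr_or_eq)
    moreover have "x < last r" using Cons.prems rne by simp
    ultimately obtain xs a b ys where "r = xs @ a # b # ys" "a < x" "x < b"
      using Cons.IH Cons.prems rne by auto
    then have "p # r = (p # xs) @ a # b # ys" by simp
    then show ?thesis using \<open>a < x\<close> \<open>x < b\<close> by blast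
  qed
qed

lemma refine_set:
  assumes v: "valid_partition c ps" and S: "finite S" "S \<subseteq> {0<..<1}"
  shows "\<exists>qs. valid_partition c qs \<and> set qs = set ps \<union> S \<and> turning c qs = turning c ps"
  using S
proof (induction S rule: finite_induct)
  case empty then show ?case using v by auto
next
  case (insert x S)
  then obtain qs where qs: "valid_partition c qs" "set qs = set ps \<union> S" "turning c qs = turning c ps" by auto
  show ?case
  proof (cases "x \<in> set qs")
    case True then show ?thesis using qs by auto
  next
    case False
    have V: "2 \<le> length qs" "hd qs = 0" "last qs = 1" "sorted_wrt (<) qs"
      using qs(1) unfolding valid_partition_def by auto
    have x: "0 < x" "x < 1" using insert by auto
    obtain xs a b ys where sp: "qs = xs @ a # b # ys" "a < x" "x < b"
      using split_sorted[OF V(4) _ _ _ False] V x by fastforce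
    have "valid_partition c (xs @ a # x # b # ys)" "turning c (xs @ a # x # b # ys) = turning c qs"
      using insert_point[of c xs a b ys x] qs(1) sp by auto
    moreover have "set (xs @ a # x # b # ys) = set ps \<union> insert x S" using qs(2) sp(1) by auto
    ultimately show ?thesis using qs(3) by metis
  qed
qed

lemma valid_set:
  assumes "valid_partition c ps"
  shows "set ps \<subseteq> {0..1}" "0 \<in> set ps" "1 \<in> set ps"
proof -
  have V: "2 \<le> length ps" "hd ps = 0" "last ps = 1" "sorted_wrt (<) ps"
    using assms unfolding valid_partition_def by auto
  have ne: "ps \<noteq> []" using V by auto
  show "0 \<in> set ps" "1 \<in> set ps" using V ne by (metis hd_in_set, metis last_in_set)
  show "set ps \<subseteq> {0..1}"
  proof
    fix x assume "x \<in> set ps"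
    then obtain i where i: "i < length ps" "x = ps!i" by (auto simp: in_set_conv_nth)
    have "ps!0 \<le> ps!i" using V(4) i by (cases "i = 0") (auto dest: sorted_wrt_nth_less)
    moreover have "ps!i \<le> ps!(length ps - 1)"
    proof (cases "i = length ps - 1")
      case False
      then have "i < length ps - 1" using i by linarith
      then show ?thesis using sorted_wrt_nth_less[OF V(4), of i "length ps - 1"] ne by simp
    qed simp
    ultimately show "x \<in> {0..1}" using V ne i by (simp add: hd_conv_nth last_conv_nth)
  qed
qed

lemma turning_unique:
  assumes v1: "valid_partition c ps" and v2: "valid_partition c ps'"
  shows "turning c ps = turning c ps'"
proof -
  obtain qs where q: "valid_partition c qs" "set qs = set ps \<union> (set ps' \<inter> {0<..<1})" "turning c qs = turning c ps"
    using refine_set[OF v1, of "set ps' \<inter> {0<..<1}"] by auto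
  obtain qs' where q': "valid_partition c qs'" "set qs' = set ps' \<union> (set ps \<inter> {0<..<1})" "turning c qs' = turning c ps'"
    using refine_set[OF v2, of "set ps \<inter> {0<..<1}"] by auto
  have "set qs = set ps \<union> set ps'" "set qs' = set ps \<union> set ps'"
    using q(2) q'(2) valid_set[OF v1] valid_set[OF v2] by (auto simp: subset_iff less_le)
  then have "qs = qs'"
    using q(1) q'(1) unfolding valid_partition_def strict_sorted_iff
    by (metis sorted_distinct_set_unique)
  then show ?thesis using q(3) q'(3) by simp
qed

lemma rot_eq: "valid_partition c ps \<Longrightarrow> rot c = turning c ps"
  unfolding rot_def by (metis someI turning_unique)


lemma arg_id:
  assumes tr: "Im (cnj a * c) \<noteq> 0" and b: "b = complex_of_real r * a" and d: "d = complex_of_real s * c"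
    and r: "0 < r" and s: "0 < s"
  shows "Arg (a / b) + Arg (c / d) = Arg (a / d) + Arg (c / b)"
proof -
  have a0: "a \<noteq> 0" and c0: "c \<noteq> 0" using tr by auto
  have "a / b = complex_of_real (1 / r)" using a0 r b by (simp add: field_simps)
  then have 1: "Arg (a / b) = 0" using r by (simp add: Arg_of_real)
  have "c / d = complex_of_real (1 / s)" using c0 s d by (simp add: field_simps)
  then have 2: "Arg (c / d) = 0" using s by (simp add: Arg_of_real)
  have "a / d = complex_of_real (1 / s) * (a / c)" using d by (simp add: field_simps)
  then have 3: "Arg (a / d) = Arg (a / c)" using s by (subst \<open>a / d = _\<close>) (rule Arg_times_of_real, simp)
  have "c / b = complex_of_real (1 / r) * inverse (a / c)" using b by (simp add: field_simps)
  then have 4: "Arg (c / b) = Arg (inverse (a / c))" using r by (subst \<open>c / b = _\<close>) (rule Arg_times_of_real, simp)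
  have nr: "a / c \<notin> \<real>"
  proof
    assume "a / c \<in> \<real>"
    then obtain x where "a / c = complex_of_real x" by (auto elim: Reals_cases)
    then have "a = complex_of_real x * c" using c0 by (simp add: field_simps)
    then have "Im (cnj a * c) = x * (Re c * Im c - Im c * Re c)"
      by (simp add: algebra_simps)
    then show False using tr by simp
  qed
  have 5: "Arg (inverse (a / c)) = - Arg (a / c)" using nr by (simp only: Arg_inverse if_False)
  show ?thesis using 1 2 3 4 5 by linarith
qed

lemma cs_corr:
  assumes "list_all2 (\<lambda>P' P. corr f c (fst P') (snd P') (fst P) (snd P) \<and> piece_regular c (fst P) (snd P)) L' L"
    and "L \<noteq> []"
  shows "cs (FF f) L' = cs (FF c) L"
proof -
  have len: "length L' = length L" using assms(1) by (rule list_all2_lengthD)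
  have R: "\<And>i. i < length L \<Longrightarrow> corr f c (fst (L'!i)) (snd (L'!i)) (fst (L!i)) (snd (L!i)) \<and> piece_regular c (fst (L!i)) (snd (L!i))"
    using assms(1) by (auto simp: list_all2_conv_all_nth)
  have F: "FF f (L'!i) (L'!j) = FF c (L!i) (L!j)" if "i < length L" "j < length L" for i j
    using corr_FF R[OF that(1)] R[OF that(2)] by blast
  have ne': "L' \<noteq> []" using len assms(2) by auto
  have "FF f (last L') (hd L') = FF c (last L) (hd L)"
    using F[of "length L - 1" 0] assms(2) ne' len by (simp add: last_conv_nth hd_conv_nth)
  moreover have "ls (FF f) L' = ls (FF c) L"
    unfolding ls_sum len by (intro sum.cong refl F) auto
  ultimately show ?thesis by (simp add: cs_def)
qed

lemma corr_affine:
  assumes "0 < \<beta>" "p < q" "\<forall>y\<in>{(p - \<alpha>) / \<beta>..(q - \<alpha>) / \<beta>}. f y = c (\<alpha> + \<beta> * y)"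
  shows "corr f c ((p - \<alpha>) / \<beta>) ((q - \<alpha>) / \<beta>) p q"
proof -
  have lt: "(p - \<alpha>) / \<beta> < (q - \<alpha>) / \<beta>" using assms by (simp add: divide_strict_right_mono)
  have r: "(q - p) / ((q - \<alpha>) / \<beta> - (p - \<alpha>) / \<beta>) = \<beta>" using assms by (simp add: field_simps)
  have e: "p + \<beta> * (y - (p - \<alpha>) / \<beta>) = \<alpha> + \<beta> * y" for y using assms by (simp add: field_simps)
  show ?thesis unfolding corr_def r e using lt assms by auto
qed

lemma sorted_hd_last:
  fixes zs :: "real list"
  assumes "sorted_wrt (<) zs" "x \<in> set zs"
  shows "hd zs \<le> x" "x \<le> last zs"
proof -
  have ne: "zs \<noteq> []" using assms by auto
  obtain i where i: "i < length zs" "x = zs!i" using assms by (auto simp: in_set_conv_nth)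
  show "hd zs \<le> x"
  proof (cases "i = 0")
    case False then show ?thesis using sorted_wrt_nth_less[OF assms(1), of 0 i] i ne by (simp add: hd_conv_nth)
  qed (use i ne in \<open>simp add: hd_conv_nth\<close>)
  show "x \<le> last zs"
  proof (cases "i = length zs - 1")
    case False
    then have "i < length zs - 1" using i by linarith
    then show ?thesis using sorted_wrt_nth_less[OF assms(1), of i "length zs - 1"] i ne by (simp add: last_conv_nth)
  qed (use i ne in \<open>simp add: last_conv_nth\<close>)
qed

lemma pcs_set_in:
  fixes zs :: "real list"
  assumes "sorted_wrt (<) zs" "P \<in> set (pcs zs)"
  shows "fst P < snd P" "hd zs \<le> fst P" "snd P \<le> last zs"
proof -
  obtain i where i: "i < length zs - 1" "P = (zs!i, zs!Suc i)"
    using assms(2) by (auto simp: in_set_conv_nth pcs_nth)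
  show "fst P < snd P" using i sorted_wrt_nth_less[OF assms(1), of i "Suc i"] by auto
  have "zs!i \<in> set zs" "zs!Suc i \<in> set zs" using i by auto
  then show "hd zs \<le> fst P" "snd P \<le> last zs" using sorted_hd_last[OF assms(1)] i by auto
qed

lemma affine_partition:
  fixes zs :: "real list"
  assumes b: "0 < \<beta>" and srt: "sorted_wrt (<) zs" and pr: "\<forall>P\<in>set (pcs zs). piece_regular c (fst P) (snd P)"
    and fc: "\<forall>y\<in>{(hd zs - \<alpha>) / \<beta>..(last zs - \<alpha>) / \<beta>}. f y = c (\<alpha> + \<beta> * y)"
  defines "h \<equiv> (\<lambda>x. (x - \<alpha>) / \<beta>)"
  shows "sorted_wrt (<) (map h zs)"
    "list_all2 (\<lambda>P' P. corr f c (fst P') (snd P') (fst P) (snd P) \<and> piece_regular c (fst P) (snd P)) (pcs (map h zs)) (pcs zs)"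
    "\<forall>P'\<in>set (pcs (map h zs)). piece_regular f (fst P') (snd P')"
proof -
  have mono: "h x < h y" if "x < y" for x y using that b by (simp add: h_def divide_strict_right_mono)
  show "sorted_wrt (<) (map h zs)" using srt by (auto simp: sorted_wrt_map intro: sorted_wrt_mono_rel mono)
  have co: "corr f c (h (fst P)) (h (snd P)) (fst P) (snd P) \<and> piece_regular c (fst P) (snd P)"
    if P: "P \<in> set (pcs zs)" for P
  proof -
    note in_ = pcs_set_in[OF srt P]
    have "\<forall>y\<in>{h (fst P)..h (snd P)}. f y = c (\<alpha> + \<beta> * y)"
    proof
      fix y assume "y \<in> {h (fst P)..h (snd P)}"
      moreover have "h (hd zs) \<le> h (fst P)" "h (snd P) \<le> h (last zs)"
        using in_ b by (auto simp: h_def divide_right_mono)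
      ultimately show "f y = c (\<alpha> + \<beta> * y)" using fc by (auto simp: h_def)
    qed
    then show ?thesis using corr_affine[OF b in_(1)] pr P unfolding h_def by auto
  qed
  show L: "list_all2 (\<lambda>P' P. corr f c (fst P') (snd P') (fst P) (snd P) \<and> piece_regular c (fst P) (snd P)) (pcs (map h zs)) (pcs zs)"
    unfolding pcs_map list.rel_map list_all2_same using co by auto
  show "\<forall>P'\<in>set (pcs (map h zs)). piece_regular f (fst P') (snd P')"
    unfolding pcs_map using co corr_main(1) by fastforce
qed


lemma piece_find_right:
  fixes ps :: "real list"
  assumes "sorted_wrt (<) ps" "ps \<noteq> []" "hd ps \<le> x" "x < last ps"
  shows "\<exists>P\<in>set (pcs ps). fst P \<le> x \<and> x < snd P"
  using assms
proof (induction ps)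
  case Nil then show ?case by simp
next
  case (Cons p r)
  then have rne: "r \<noteq> []" by auto
  then obtain q r' where r: "r = q # r'" by (cases r) auto
  show ?case
  proof (cases "x < q")
    case True then show ?thesis using Cons.prems r by auto
  next
    case False
    then have "\<exists>P\<in>set (pcs r). fst P \<le> x \<and> x < snd P"
      using Cons.IH Cons.prems r by auto
    then show ?thesis using r by auto
  qed
qed

lemma piece_find_left:
  fixes ps :: "real list"
  assumes "sorted_wrt (<) ps" "ps \<noteq> []" "hd ps < x" "x \<le> last ps"
  shows "\<exists>P\<in>set (pcs ps). fst P < x \<and> x \<le> snd P"
  using assms
proof (induction ps)
  case Nil then show ?case by simp
next
  case (Cons p r)
  then have rne: "r \<noteq> []" by auto
  then obtain q r' where r: "r = q # r'" by (cases r) auto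
  show ?case
  proof (cases "x \<le> q")
    case True then show ?thesis using Cons.prems r by auto
  next
    case False
    then have "\<exists>P\<in>set (pcs r). fst P < x \<and> x \<le> snd P"
      using Cons.IH Cons.prems r by auto
    then show ?thesis using r by auto
  qed
qed

lemma vp_right:
  assumes "valid_partition C ps" "0 \<le> x" "x < 1"
  shows "\<exists>D. (C has_vector_derivative D) (at_right x)"
proof -
  have V: "sorted_wrt (<) ps" "ps \<noteq> []" "hd ps = 0" "last ps = 1"
     "\<forall>P\<in>set (pcs ps). piece_regular C (fst P) (snd P)"
    using assms(1) unfolding valid_pcs by auto
  have "\<exists>P\<in>set (pcs ps). fst P \<le> x \<and> x < snd P"
    using piece_find_right[OF V(1,2)] V(3,4) assms(2,3) by simp
  then obtain P where P: "P \<in> set (pcs ps)" "fst P \<le> x" "x < snd P" by blast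
  obtain D where D: "\<And>s. s \<in> {fst P..snd P} \<Longrightarrow> (C has_vector_derivative D s) (at s within {fst P..snd P})"
    using pr_D[OF V(5)[rule_format, OF P(1)]] by metis
  have "(C has_vector_derivative D x) (at x within {x..snd P})"
    using has_vector_derivative_within_subset[OF D[of x]] P by auto
  then show ?thesis using P by (auto simp: at_within_Icc_at_right)
qed

lemma vp_left:
  assumes "valid_partition C ps" "0 < x" "x \<le> 1"
  shows "\<exists>D. (C has_vector_derivative D) (at_left x)"
proof -
  have V: "sorted_wrt (<) ps" "ps \<noteq> []" "hd ps = 0" "last ps = 1"
     "\<forall>P\<in>set (pcs ps). piece_regular C (fst P) (snd P)"
    using assms(1) unfolding valid_pcs by auto
  have "\<exists>P\<in>set (pcs ps). fst P < x \<and> x \<le> snd P"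
    using piece_find_left[OF V(1,2)] V(3,4) assms(2,3) by simp
  then obtain P where P: "P \<in> set (pcs ps)" "fst P < x" "x \<le> snd P" by blast
  obtain D where D: "\<And>s. s \<in> {fst P..snd P} \<Longrightarrow> (C has_vector_derivative D s) (at s within {fst P..snd P})"
    using pr_D[OF V(5)[rule_format, OF P(1)]] by metis
  have "(C has_vector_derivative D x) (at x within {fst P..x})"
    using has_vector_derivative_within_subset[OF D[of x]] P by auto
  then show ?thesis using P by (auto simp: at_within_Icc_at_left)
qed

lemma vd_right_eq: "(C has_vector_derivative D) (at_right x) \<Longrightarrow> Rd C x = D"
  unfolding Rd_def
  using vector_derivative_within_cbox[of x "x+1" x C D] by (simp add: at_within_Icc_at_right)

lemma vd_left_eq: "(C has_vector_derivative D) (at_left x) \<Longrightarrow> Ld C x = D"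
  unfolding Ld_def
  using vector_derivative_within_cbox[of "x - 1" x x C D] by (simp add: at_within_Icc_at_left)

lemma Rd_affine:
  assumes s: "s < s2" and b: "0 < \<beta>" and fc: "\<forall>y\<in>{s..s2}. f y = C (\<alpha> + \<beta> * y)"
    and D: "(C has_vector_derivative D) (at_right (\<alpha> + \<beta> * s))"
  shows "Rd f s = complex_of_real \<beta> * Rd C (\<alpha> + \<beta> * s)"
proof -
  have fc': "\<forall>y\<in>{s..s2}. f y = C ((\<alpha> + \<beta> * s) + \<beta> * (y - s))"
    using fc by (simp add: algebra_simps)
  have lt: "\<alpha> + \<beta> * s < (\<alpha> + \<beta> * s) + \<beta> * (s2 - s)" using s b by simp
  have D': "(C has_vector_derivative D) (at ((\<alpha> + \<beta> * s) + \<beta> * (s - s)) within {\<alpha> + \<beta> * s..(\<alpha> + \<beta> * s) + \<beta> * (s2 - s)})"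
    using D at_within_Icc_at_right[OF lt] by simp
  have "(f has_vector_derivative (\<beta> *\<^sub>R D)) (at s within {s..s2})"
    by (rule vd_affine_within[OF s b fc' _ D']) (use s in auto)
  then have "Rd f s = \<beta> *\<^sub>R D" using s by (intro vd_right_eq) (simp add: at_within_Icc_at_right)
  then show ?thesis using vd_right_eq[OF D] by (simp add: scaleR_conv_of_real)
qed

lemma Ld_affine:
  assumes s: "s1 < s" and b: "0 < \<beta>" and fc: "\<forall>y\<in>{s1..s}. f y = C (\<alpha> + \<beta> * y)"
    and D: "(C has_vector_derivative D) (at_left (\<alpha> + \<beta> * s))"
  shows "Ld f s = complex_of_real \<beta> * Ld C (\<alpha> + \<beta> * s)"
proof -
  have fc': "\<forall>y\<in>{s1..s}. f y = C ((\<alpha> + \<beta> * s1) + \<beta> * (y - s1))"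
    using fc by (simp add: algebra_simps)
  have e: "(\<alpha> + \<beta> * s1) + \<beta> * (s - s1) = \<alpha> + \<beta> * s" by (simp add: algebra_simps)
  have lt: "\<alpha> + \<beta> * s1 < \<alpha> + \<beta> * s" using s b by simp
  have D': "(C has_vector_derivative D) (at ((\<alpha> + \<beta> * s1) + \<beta> * (s - s1)) within {\<alpha> + \<beta> * s1..(\<alpha> + \<beta> * s1) + \<beta> * (s - s1)})"
    unfolding e using D at_within_Icc_at_left[OF lt] by simp
  have "(f has_vector_derivative (\<beta> *\<^sub>R D)) (at s within {s1..s})"
    by (rule vd_affine_within[OF s b fc' _ D']) (use s in auto)
  then have "Ld f s = \<beta> *\<^sub>R D" using s by (intro vd_left_eq) (simp add: at_within_Icc_at_left)
  then show ?thesis using vd_left_eq[OF D] by (simp add: scaleR_conv_of_real)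
qed

definition smooth :: "(real \<Rightarrow> complex) \<Rightarrow> real \<Rightarrow> bool" where
  "smooth C x \<longleftrightarrow> (\<exists>r>0. Ld C (if x = 0 then 1 else x) = complex_of_real r * Rd C x)"

definition Inv :: "(real \<Rightarrow> complex) \<Rightarrow> bool" where
  "Inv C \<longleftrightarrow> (\<exists>ps. valid_partition C ps) \<and> C 0 = C 1 \<and>
     (\<forall>t1\<in>{0..<1}. \<forall>t2\<in>{0..<1}. \<forall>t3\<in>{0..<1}. C t1 = C t2 \<and> C t2 = C t3 \<longrightarrow> t1 = t2 \<or> t2 = t3 \<or> t1 = t3) \<and>
     (\<forall>x\<in>{0..<1}. \<forall>y\<in>{0..<1}. x \<noteq> y \<and> C x = C y \<longrightarrow> smooth C x \<and> Im (cnj (Rd C x) * Rd C y) \<noteq> 0)"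

lemma smooth_tr:
  assumes "Ld I s0 = complex_of_real b1 * X" "Rd I s = complex_of_real b2 * Y" "0 < b1" "0 < b2"
    "X = complex_of_real r * Y" "0 < r"
  shows "\<exists>r'>0. Ld I s0 = complex_of_real r' * Rd I s"
proof (intro exI conjI)
  show "0 < b1 * r / b2" using assms by simp
  show "Ld I s0 = complex_of_real (b1 * r / b2) * Rd I s" using assms by (simp add: field_simps)
qed

lemma Inv_transfer:
  assumes C: "Inv C" and v: "\<exists>ps. valid_partition I ps" and e: "I 0 = I 1"
    and sig: "\<And>s. s \<in> {0..<1} \<Longrightarrow> \<sigma> s \<in> {0..<1} \<and> I s = C (\<sigma> s)" and inj: "inj_on \<sigma> {0..<1}"
    and good: "\<And>s s'. s \<in> {0..<1} \<Longrightarrow> s' \<in> {0..<1} \<Longrightarrow> s' \<noteq> s \<Longrightarrow> I s' = I s \<Longrightarrow>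
         (\<exists>\<beta>>0. Rd I s = complex_of_real \<beta> * Rd C (\<sigma> s)) \<and> (smooth C (\<sigma> s) \<longrightarrow> smooth I s)"
  shows "Inv I"
proof -
  have C3: "\<And>t1 t2 t3. t1\<in>{0..<1} \<Longrightarrow> t2\<in>{0..<1} \<Longrightarrow> t3\<in>{0..<1} \<Longrightarrow> C t1 = C t2 \<Longrightarrow> C t2 = C t3 \<Longrightarrow> t1 = t2 \<or> t2 = t3 \<or> t1 = t3"
    using C unfolding Inv_def by blast
  have C4: "\<And>x y. x\<in>{0..<1} \<Longrightarrow> y\<in>{0..<1} \<Longrightarrow> x \<noteq> y \<Longrightarrow> C x = C y \<Longrightarrow> smooth C x \<and> Im (cnj (Rd C x) * Rd C y) \<noteq> 0"
    using C unfolding Inv_def by blast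
  have I3: "t1 = t2 \<or> t2 = t3 \<or> t1 = t3" if "t1\<in>{0..<1}" "t2\<in>{0..<1}" "t3\<in>{0..<1}" "I t1 = I t2" "I t2 = I t3" for t1 t2 t3
  proof -
    have "\<sigma> t1 = \<sigma> t2 \<or> \<sigma> t2 = \<sigma> t3 \<or> \<sigma> t1 = \<sigma> t3"
      using C3[of "\<sigma> t1" "\<sigma> t2" "\<sigma> t3"] sig that by auto
    then show ?thesis using inj that by (auto dest: inj_onD)
  qed
  have I4: "smooth I x \<and> Im (cnj (Rd I x) * Rd I y) \<noteq> 0" if xy: "x\<in>{0..<1}" "y\<in>{0..<1}" "x \<noteq> y" "I x = I y" for x y
  proof -
    have ne: "\<sigma> x \<noteq> \<sigma> y" using inj that by (auto dest: inj_onD)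
    have cc: "C (\<sigma> x) = C (\<sigma> y)" using sig that by metis
    have sx: "\<sigma> x \<in> {0..<1}" "\<sigma> y \<in> {0..<1}" using sig that by auto
    note c4 = C4[OF sx ne cc]
    have h: "y \<noteq> x" "I y = I x" using that by auto
    obtain b1 where b1: "b1 > 0" "Rd I x = complex_of_real b1 * Rd C (\<sigma> x)" and smx: "smooth C (\<sigma> x) \<longrightarrow> smooth I x"
      using good[OF xy(1) xy(2) h] by blast
    obtain b2 where b2: "b2 > 0" "Rd I y = complex_of_real b2 * Rd C (\<sigma> y)"
      using good[OF xy(2) xy(1) xy(3) xy(4)] by blast
    have "Im (cnj (Rd I x) * Rd I y) = b1 * b2 * Im (cnj (Rd C (\<sigma> x)) * Rd C (\<sigma> y))"
      by (simp add: b1 b2 algebra_simps)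
    then show ?thesis using c4 smx b1 b2 by simp
  qed
  show ?thesis unfolding Inv_def using v e I3 I4 by blast
qed

lemma Inv_base:
  assumes "curve_C \<gamma>"
  shows "Inv \<gamma>"
proof -
  obtain D where D: "continuous_on {0..1} D"
     "\<And>s. s \<in> {0..1} \<Longrightarrow> (\<gamma> has_vector_derivative D s) (at s within {0..1})"
     "\<And>s. s \<in> {0..1} \<Longrightarrow> D s \<noteq> 0" "D 0 = D 1" and g01: "\<gamma> 0 = \<gamma> 1"
    using assms unfolding curve_C_def regular_closed_def by blast
  have gen: "\<forall>t1\<in>{0..<1}. \<forall>t2\<in>{0..<1}. \<forall>t3\<in>{0..<1}.
        \<gamma> t1 = \<gamma> t2 \<and> \<gamma> t2 = \<gamma> t3 \<longrightarrow> t1 = t2 \<or> t2 = t3 \<or> t1 = t3"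
    "\<forall>t\<in>{0..<1}. \<forall>t'\<in>{0..<1}. t \<noteq> t' \<and> \<gamma> t = \<gamma> t' \<longrightarrow>
        Im (cnj (vector_derivative \<gamma> (at t within {0..1})) *
            vector_derivative \<gamma> (at t' within {0..1})) \<noteq> 0"
    using assms unfolding curve_C_def generic_def by blast+
  have pr: "piece_regular \<gamma> 0 1" unfolding piece_regular_def using D by auto
  have v: "valid_partition \<gamma> [0, 1]" unfolding valid_partition_def using pr by simp
  have vd: "vector_derivative \<gamma> (at s within {0..1}) = D s" if "s \<in> {0..1}" for s
    using vector_derivative_within_cbox[of 0 1 s \<gamma> "D s"] D(2)[OF that] that by simp
  have R: "Rd \<gamma> s = D s" if "0 \<le> s" "s < 1" for s
  proof -
    have "(\<gamma> has_vector_derivative D s) (at s within {s..1})"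
      using has_vector_derivative_within_subset[OF D(2)[of s]] that by auto
    then show ?thesis using that by (intro vd_right_eq) (simp add: at_within_Icc_at_right)
  qed
  have L: "Ld \<gamma> s = D s" if "0 < s" "s \<le> 1" for s
  proof -
    have "(\<gamma> has_vector_derivative D s) (at s within {0..s})"
      using has_vector_derivative_within_subset[OF D(2)[of s]] that by auto
    then show ?thesis using that by (intro vd_left_eq) (simp add: at_within_Icc_at_left)
  qed
  have sm: "smooth \<gamma> x" if "x \<in> {0..<1}" for x
  proof -
    have "Ld \<gamma> (if x = 0 then 1 else x) = complex_of_real 1 * Rd \<gamma> x"
      using that R L D(4) by auto
    then show ?thesis unfolding smooth_def by (metis zero_less_one)
  qed
  have tr: "Im (cnj (Rd \<gamma> x) * Rd \<gamma> y) \<noteq> 0" if "x\<in>{0..<1}" "y\<in>{0..<1}" "x \<noteq> y" "\<gamma> x = \<gamma> y" for x y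
    using gen(2) that R vd by auto
  show ?thesis unfolding Inv_def using v g01 gen(1) sm tr by blast
qed


lemma rot_subpath:
  fixes zs :: "real list"
  assumes srt: "sorted_wrt (<) zs" and len: "2 \<le> length zs"
    and pr: "\<forall>P\<in>set (pcs zs). piece_regular C (fst P) (snd P)" and a: "hd zs = a" and b: "last zs = b"
  shows "valid_partition (subpath a b C) (map (\<lambda>x. (x - a) / (b - a)) zs)"
    "rot (subpath a b C) = cs (FF C) (pcs zs)"
proof -
  have ne: "zs \<noteq> []" using len by auto
  have ab: "a < b"
  proof -
    have "zs!0 < zs!(length zs - 1)" using sorted_wrt_nth_less[OF srt, of 0 "length zs - 1"] len by simp
    then show ?thesis using a b ne by (simp add: hd_conv_nth last_conv_nth)
  qed
  have fc: "\<forall>y\<in>{(hd zs - a) / (b - a)..(last zs - a) / (b - a)}. subpath a b C y = C (a + (b - a) * y)"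
    by (simp add: subpath_def algebra_simps)
  note AP = affine_partition[OF _ srt pr fc, unfolded a b] 
  have bp: "0 < b - a" using ab by simp
  note AP = AP[OF bp]
  let ?qs = "map (\<lambda>x. (x - a) / (b - a)) zs"
  have hd: "hd ?qs = 0" using ne a by (simp add: hd_map)
  have lst: "last ?qs = 1" using ne b ab by (simp add: last_map)
  show v: "valid_partition (subpath a b C) ?qs"
    unfolding valid_pcs using AP(1,3) hd lst len by simp
  have pne: "pcs zs \<noteq> []" using len by (metis length_0_conv pcs_length not_one_le_zero diff_is_0_eq Suc_1 Suc_le_eq not_less_eq_eq)
  have "rot (subpath a b C) = turning (subpath a b C) ?qs" by (rule rot_eq[OF v])
  also have "\<dots> = cs (FF (subpath a b C)) (pcs ?qs)" using AP(1) len by (intro turning_cs) auto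
  also have "\<dots> = cs (FF C) (pcs zs)" by (rule cs_corr[OF AP(2) pne])
  finally show "rot (subpath a b C) = cs (FF C) (pcs zs)" .
qed

lemma rot_join:
  fixes xs ys :: "real list"
  assumes s1: "sorted_wrt (<) (xs @ [t])" and s2: "sorted_wrt (<) (t' # ys)"
    and xne: "xs \<noteq> []" and yne: "ys \<noteq> []" and h0: "hd xs = 0" and l1: "last ys = 1"
    and pr1: "\<forall>P\<in>set (pcs (xs @ [t])). piece_regular C (fst P) (snd P)"
    and pr2: "\<forall>P\<in>set (pcs (t' # ys)). piece_regular C (fst P) (snd P)"
    and ct: "C t = C t'" and t: "0 < t" "t < t'" "t' < 1"
  defines "I \<equiv> subpath 0 t C +++ subpath t' 1 C"
  defines "qs \<equiv> map (\<lambda>x. (x - 0) / (2 * t)) xs @ 1/2 # map (\<lambda>x. (x - (2 * t' - 1)) / (2 * (1 - t'))) ys"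
  shows "valid_partition I qs" "rot I = cs (FF C) (pcs (xs @ [t]) @ pcs (t' # ys))"
proof -
  define h1 where "h1 = (\<lambda>x::real. (x - 0) / (2 * t))"
  define h2 where "h2 = (\<lambda>x::real. (x - (2 * t' - 1)) / (2 * (1 - t')))"
  have h1t: "h1 t = 1/2" using t by (simp add: h1_def)
  have h2t: "h2 t' = 1/2" using t by (simp add: h2_def field_simps)
  have h10: "h1 0 = 0" by (simp add: h1_def)
  have h21: "h2 1 = 1" using t by (simp add: h2_def field_simps)
  have fc1: "\<forall>y\<in>{(hd (xs @ [t]) - 0) / (2 * t)..(last (xs @ [t]) - 0) / (2 * t)}. I y = C (0 + (2 * t) * y)"
  proof
    fix y assume "y \<in> {(hd (xs @ [t]) - 0) / (2 * t)..(last (xs @ [t]) - 0) / (2 * t)}"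
    then have y: "y * 2 \<le> 1" using xne h0 t by (simp add: field_simps)
    then show "I y = C (0 + (2 * t) * y)" by (simp add: I_def joinpaths_def subpath_def algebra_simps)
  qed
  have fc2: "\<forall>y\<in>{(hd (t' # ys) - (2 * t' - 1)) / (2 * (1 - t'))..(last (t' # ys) - (2 * t' - 1)) / (2 * (1 - t'))}.
      I y = C ((2 * t' - 1) + (2 * (1 - t')) * y)"
  proof
    fix y assume "y \<in> {(hd (t' # ys) - (2 * t' - 1)) / (2 * (1 - t'))..(last (t' # ys) - (2 * t' - 1)) / (2 * (1 - t'))}"
    then have y0: "(t' - (2 * t' - 1)) / (2 * (1 - t')) \<le> y" by (simp only: atLeastAtMost_iff list.sel(1))
    have "(t' - (2 * t' - 1)) / (2 * (1 - t')) = 1/2" using h2t by (simp add: h2_def)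
    then have y: "1 / 2 \<le> y" using y0 by linarith
    show "I y = C ((2 * t' - 1) + (2 * (1 - t')) * y)"
    proof (cases "y * 2 \<le> 1")
      case True
      then have "y = 1/2" using y by simp
      then show ?thesis using ct by (simp add: I_def joinpaths_def subpath_def algebra_simps)
    next
      case False
      then show ?thesis by (simp add: I_def joinpaths_def subpath_def algebra_simps)
    qed
  qed
  have b1: "0 < 2 * t" and b2: "0 < 2 * (1 - t')" using t by auto
  note A1 = affine_partition[OF b1 s1 pr1 fc1, folded h1_def]
  note A2 = affine_partition[OF b2 s2 pr2 fc2, folded h2_def]
  have m1: "map h1 (xs @ [t]) = map h1 xs @ [1/2]" using h1t by simp
  have m2: "map h2 (t' # ys) = 1/2 # map h2 ys" using h2t by simp
  have qs: "qs = map h1 xs @ 1/2 # map h2 ys" by (simp add: qs_def h1_def h2_def)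
  have pq: "pcs qs = pcs (map h1 (xs @ [t])) @ pcs (map h2 (t' # ys))"
    unfolding qs m1 m2 by (rule pcs_append)
  have sq: "sorted_wrt (<) qs"
  proof -
    have a: "sorted_wrt (<) (map h1 xs @ [1/2])" using A1(1) unfolding m1 .
    have b: "sorted_wrt (<) (1/2 # map h2 ys)" using A2(1) unfolding m2 .
    show ?thesis unfolding qs sorted_wrt_append
      using a b by (auto simp: sorted_wrt_append) (smt (verit))
  qed
  have hq: "hd qs = 0" using xne h0 h10 by (simp add: qs hd_map)
  have lq: "last qs = 1" using yne l1 h21 by (simp add: qs last_map)
  have lenq: "2 \<le> length qs" using xne by (cases xs) (auto simp: qs)
  have prq: "\<forall>P\<in>set (pcs qs). piece_regular I (fst P) (snd P)"
    using A1(3) A2(3) unfolding pq set_append by blast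
  show v: "valid_partition I qs" unfolding valid_pcs using hq lq lenq sq prq by simp
  have ne: "pcs (xs @ [t]) @ pcs (t' # ys) \<noteq> []" using yne by (cases ys) auto
  have "rot I = turning I qs" by (rule rot_eq[OF v])
  also have "\<dots> = cs (FF I) (pcs qs)" using sq lenq by (intro turning_cs)
  also have "\<dots> = cs (FF C) (pcs (xs @ [t]) @ pcs (t' # ys))"
    unfolding pq by (rule cs_corr[OF list_all2_appendI[OF A1(2) A2(2)] ne])
  finally show "rot I = cs (FF C) (pcs (xs @ [t]) @ pcs (t' # ys))" .
qed


lemma good_interior:
  assumes s: "a1 < s" "s < b1" "s \<noteq> 0" and b: "0 < \<beta>" and fc: "\<forall>y\<in>{a1..b1}. I y = C (\<alpha> + \<beta> * y)"
    and DR: "\<exists>D. (C has_vector_derivative D) (at_right (\<alpha> + \<beta> * s))"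
    and DL: "\<exists>D. (C has_vector_derivative D) (at_left (\<alpha> + \<beta> * s))"
    and nz: "\<alpha> + \<beta> * s \<noteq> 0"
  shows "(\<exists>\<beta>'>0. Rd I s = complex_of_real \<beta>' * Rd C (\<alpha> + \<beta> * s)) \<and> (smooth C (\<alpha> + \<beta> * s) \<longrightarrow> smooth I s)"
proof -
  have fr: "\<forall>y\<in>{s..b1}. I y = C (\<alpha> + \<beta> * y)" and fl: "\<forall>y\<in>{a1..s}. I y = C (\<alpha> + \<beta> * y)"
    using fc s by auto
  have R: "Rd I s = complex_of_real \<beta> * Rd C (\<alpha> + \<beta> * s)"
    using DR Rd_affine[OF s(2) b fr] by blast
  have L: "Ld I s = complex_of_real \<beta> * Ld C (\<alpha> + \<beta> * s)"
    using DL Ld_affine[OF s(1) b fl] by blast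
  have "smooth I s" if "smooth C (\<alpha> + \<beta> * s)"
  proof -
    have "\<exists>r>0. Ld C (\<alpha> + \<beta> * s) = complex_of_real r * Rd C (\<alpha> + \<beta> * s)"
      using that unfolding smooth_def if_not_P[OF nz] .
    then obtain r where r: "r > 0" "Ld C (\<alpha> + \<beta> * s) = complex_of_real r * Rd C (\<alpha> + \<beta> * s)"
      by blast
    have "\<exists>r'>0. Ld I s = complex_of_real r' * Rd I s"
      by (rule smooth_tr[OF L R b b r(2) r(1)])
    then show ?thesis using s(3) unfolding smooth_def by simp
  qed
  then show ?thesis using R b by blast
qed

lemma Inv_C:
  assumes "Inv C"
  obtains ps where "valid_partition C ps" "C 0 = C 1"
    "\<And>t1 t2 t3. t1\<in>{0..<1} \<Longrightarrow> t2\<in>{0..<1} \<Longrightarrow> t3\<in>{0..<1} \<Longrightarrow> C t1 = C t2 \<Longrightarrow> C t2 = C t3 \<Longrightarrow> t1 = t2 \<or> t2 = t3 \<or> t1 = t3"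
  using assms unfolding Inv_def by blast

lemma Inv_sub1:
  assumes C: "Inv C" and t: "0 < t'" "t' < 1" and ct: "C 0 = C t'"
    and v: "\<exists>qs. valid_partition (subpath t' 1 C) qs"
  shows "Inv (subpath t' 1 C)"
proof -
  obtain ps where ps: "valid_partition C ps" and C01: "C 0 = C 1"
    and C3: "\<And>t1 t2 t3. t1\<in>{0..<1} \<Longrightarrow> t2\<in>{0..<1} \<Longrightarrow> t3\<in>{0..<1} \<Longrightarrow> C t1 = C t2 \<Longrightarrow> C t2 = C t3 \<Longrightarrow> t1 = t2 \<or> t2 = t3 \<or> t1 = t3"
    using Inv_C[OF C] by blast
  define I where "I = subpath t' 1 C"
  define \<sigma> where "\<sigma> s = t' + (1 - t') * s" for s
  have fc: "\<forall>y\<in>{0..1}. I y = C (t' + (1 - t') * y)" by (simp add: I_def subpath_def algebra_simps)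
  have b: "0 < 1 - t'" using t by simp
  have sig: "\<sigma> s \<in> {0..<1} \<and> I s = C (\<sigma> s)" if "s \<in> {0..<1}" for s
  proof -
    have "(1 - t') * s < (1 - t') * 1" using that b by (intro mult_strict_left_mono) auto
    then have "t' + (1 - t') * s < 1" by (simp add: algebra_simps)
    moreover have "0 \<le> (1 - t') * s" using that b by simp
    ultimately show ?thesis using that t fc by (auto simp: \<sigma>_def)
  qed
  have inj: "inj_on \<sigma> {0..<1}" using b by (auto simp: inj_on_def \<sigma>_def)
  have e: "I 0 = I 1" using ct C01 by (simp add: I_def subpath_def)
  have good: "(\<exists>\<beta>>0. Rd I s = complex_of_real \<beta> * Rd C (\<sigma> s)) \<and> (smooth C (\<sigma> s) \<longrightarrow> smooth I s)"
    if s: "s \<in> {0..<1}" "s' \<in> {0..<1}" "s' \<noteq> s" "I s' = I s" for s s'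
  proof (cases "s = 0")
    case True
    have a: "\<sigma> s' \<in> {0..<1}" "I s' = C (\<sigma> s')" using sig[OF s(2)] by auto
    have s0: "\<sigma> 0 = t'" "0 \<in> {0..<1::real}" by (auto simp: \<sigma>_def)
    have "\<sigma> s' \<noteq> t'" using inj s True s0 by (metis inj_onD)
    moreover have "\<sigma> s' \<noteq> 0" using b s(2) t by (simp add: \<sigma>_def) (smt (verit) mult_nonneg_nonneg)
    moreover have "C (\<sigma> s') = C t'"
    proof -
      have "C (\<sigma> s') = I s'" using a(2) by simp
      also have "\<dots> = I 0" using s(4) True by simp
      also have "\<dots> = C t'" using sig[OF s0(2)] s0(1) by simp
      finally show ?thesis .
    qed
    moreover have "0 = t' \<or> t' = \<sigma> s' \<or> 0 = \<sigma> s'"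
      by (rule C3) (use t a(1) ct calculation(3) in auto)
    ultimately have False using t by auto
    then show ?thesis ..
  next
    case False
    then have s0: "0 < s" "s < 1" using s by auto
    have "0 \<le> (1 - t') * s" using b s0 by simp
    then have sr: "\<sigma> s \<in> {0<..<1}" using sig[OF s(1)] t by (auto simp: \<sigma>_def)
    show ?thesis unfolding \<sigma>_def
      by (rule good_interior[OF s0 False b fc])
        (use vp_right[OF ps] vp_left[OF ps] sr in \<open>auto simp: \<sigma>_def\<close>)
  qed
  have vI: "\<exists>ps. valid_partition I ps" using v by (simp add: I_def)
  show ?thesis using Inv_transfer[OF C vI e sig inj good] unfolding I_def .
qed

lemma Inv_sub2:
  assumes C: "Inv C" and t: "0 < t" "t < 1" and ct: "C 0 = C t"
    and v: "\<exists>qs. valid_partition (subpath 0 t C) qs"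
  shows "Inv (subpath 0 t C)"
proof -
  obtain ps where ps: "valid_partition C ps" and C01: "C 0 = C 1"
    and C3: "\<And>t1 t2 t3. t1\<in>{0..<1} \<Longrightarrow> t2\<in>{0..<1} \<Longrightarrow> t3\<in>{0..<1} \<Longrightarrow> C t1 = C t2 \<Longrightarrow> C t2 = C t3 \<Longrightarrow> t1 = t2 \<or> t2 = t3 \<or> t1 = t3"
    using Inv_C[OF C] by blast
  define I where "I = subpath 0 t C"
  define \<sigma> where "\<sigma> s = 0 + t * s" for s
  have fc: "\<forall>y\<in>{0..1}. I y = C (0 + t * y)" by (simp add: I_def subpath_def algebra_simps)
  have b: "0 < t" using t by simp
  have sig: "\<sigma> s \<in> {0..<1} \<and> I s = C (\<sigma> s)" if "s \<in> {0..<1}" for s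
  proof -
    have "t * s \<le> t" using that b by (intro mult_left_le) auto
    then have "t * s < 1" using t by linarith
    moreover have "0 \<le> t * s" using that b by simp
    ultimately show ?thesis using that t fc by (auto simp: \<sigma>_def)
  qed
  have inj: "inj_on \<sigma> {0..<1}" using b by (auto simp: inj_on_def \<sigma>_def)
  have e: "I 0 = I 1" using ct by (simp add: I_def subpath_def)
  have good: "(\<exists>\<beta>>0. Rd I s = complex_of_real \<beta> * Rd C (\<sigma> s)) \<and> (smooth C (\<sigma> s) \<longrightarrow> smooth I s)"
    if s: "s \<in> {0..<1}" "s' \<in> {0..<1}" "s' \<noteq> s" "I s' = I s" for s s'
  proof (cases "s = 0")
    case True
    have a: "\<sigma> s' \<in> {0..<1}" "I s' = C (\<sigma> s')" using sig[OF s(2)] by auto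
    have s0: "\<sigma> 0 = 0" "0 \<in> {0..<1::real}" by (auto simp: \<sigma>_def)
    have "\<sigma> s' \<noteq> 0" using inj s True s0 by (metis inj_onD)
    moreover have "\<sigma> s' \<noteq> t" using b s(2) by (simp add: \<sigma>_def)
    moreover have "C (\<sigma> s') = C 0"
    proof -
      have "C (\<sigma> s') = I s'" using a(2) by simp
      also have "\<dots> = I 0" using s(4) True by simp
      also have "\<dots> = C 0" using sig[OF s0(2)] s0(1) by simp
      finally show ?thesis .
    qed
    moreover have "0 = t \<or> t = \<sigma> s' \<or> 0 = \<sigma> s'"
      by (rule C3) (use t a(1) ct calculation(3) in auto)
    ultimately have False using t by auto
    then show ?thesis ..
  next
    case False
    then have s0: "0 < s" "s < 1" using s by auto
    have "t * s < t" using b s0 by (metis mult.right_neutral mult_strict_left_mono)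
    moreover have "0 < t * s" using b s0 by simp
    ultimately have "0 < t * s" "t * s < 1" using t by linarith+
    then have sr: "\<sigma> s \<in> {0<..<1}" by (simp add: \<sigma>_def)
    show ?thesis unfolding \<sigma>_def
      by (rule good_interior[OF s0 False b fc])
        (use vp_right[OF ps] vp_left[OF ps] sr in \<open>auto simp: \<sigma>_def\<close>)
  qed
  have vI: "\<exists>ps. valid_partition I ps" using v by (simp add: I_def)
  show ?thesis using Inv_transfer[OF C vI e sig inj good] unfolding I_def .
qed

lemma Inv_join:
  assumes C: "Inv C" and t: "0 < t" "t < t'" "t' < 1" and ct: "C t = C t'"
    and v: "\<exists>qs. valid_partition (subpath 0 t C +++ subpath t' 1 C) qs"
  shows "Inv (subpath 0 t C +++ subpath t' 1 C)"
proof -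
  obtain ps where ps: "valid_partition C ps" and C01: "C 0 = C 1"
    and C3: "\<And>t1 t2 t3. t1\<in>{0..<1} \<Longrightarrow> t2\<in>{0..<1} \<Longrightarrow> t3\<in>{0..<1} \<Longrightarrow> C t1 = C t2 \<Longrightarrow> C t2 = C t3 \<Longrightarrow> t1 = t2 \<or> t2 = t3 \<or> t1 = t3"
    using Inv_C[OF C] by blast
  define I where "I = subpath 0 t C +++ subpath t' 1 C"
  define \<sigma> where "\<sigma> s = (if s * 2 \<le> 1 then 0 + (2 * t) * s else (2 * t' - 1) + (2 * (1 - t')) * s)" for s
  have fcA: "\<forall>y\<in>{0..1/2}. I y = C (0 + (2 * t) * y)"
  proof
    fix y :: real assume "y \<in> {0..1/2}"
    then have "y * 2 \<le> 1" by simp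
    then show "I y = C (0 + (2 * t) * y)" by (simp add: I_def joinpaths_def subpath_def algebra_simps)
  qed
  have fcB: "\<forall>y\<in>{1/2..1}. I y = C ((2 * t' - 1) + (2 * (1 - t')) * y)"
  proof
    fix y :: real assume y: "y \<in> {1/2..1}"
    show "I y = C ((2 * t' - 1) + (2 * (1 - t')) * y)"
    proof (cases "y * 2 \<le> 1")
      case True
      then have "y = 1/2" using y by simp
      then show ?thesis using ct by (simp add: I_def joinpaths_def subpath_def algebra_simps)
    next
      case False
      then show ?thesis by (simp add: I_def joinpaths_def subpath_def algebra_simps)
    qed
  qed
  have bA: "0 < 2 * t" and bB: "0 < 2 * (1 - t')" using t by auto
  have br1: "0 \<le> \<sigma> s \<and> \<sigma> s \<le> t" if "s * 2 \<le> 1" "0 \<le> s" for s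
  proof -
    have "(2 * t) * s \<le> (2 * t) * (1/2)" using that bA by (intro mult_left_mono) auto
    then show ?thesis using that t by (simp add: \<sigma>_def)
  qed
  have br2: "t' < \<sigma> s \<and> \<sigma> s < 1" if "\<not> s * 2 \<le> 1" "s < 1" for s
  proof -
    have "(2 * (1 - t')) * (1/2) < (2 * (1 - t')) * s" using that bB by (intro mult_strict_left_mono) auto
    moreover have "(2 * (1 - t')) * s < (2 * (1 - t')) * 1" using that bB by (intro mult_strict_left_mono) auto
    ultimately show ?thesis using that t by (simp add: \<sigma>_def algebra_simps)
  qed
  have sig: "\<sigma> s \<in> {0..<1} \<and> I s = C (\<sigma> s)" if "s \<in> {0..<1}" for s
  proof (cases "s * 2 \<le> 1")
    case True
    have eq: "\<sigma> s = 0 + (2 * t) * s" using True by (simp add: \<sigma>_def)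
    have "s \<in> {0..1/2}" using True that by auto
    then have "I s = C (\<sigma> s)" using fcA eq by simp
    moreover have "0 \<le> \<sigma> s" "\<sigma> s \<le> t" using br1[OF True] that by auto
    ultimately show ?thesis using t by simp
  next
    case False
    have eq: "\<sigma> s = (2 * t' - 1) + (2 * (1 - t')) * s" using False by (simp add: \<sigma>_def)
    have "s \<in> {1/2..1}" using False that by auto
    then have "I s = C (\<sigma> s)" using fcB eq by simp
    moreover have "t' < \<sigma> s" "\<sigma> s < 1" using br2[OF False] that by auto
    ultimately show ?thesis using t by simp
  qed
  have inj: "inj_on \<sigma> {0..<1}"
  proof (rule inj_onI)
    fix x y assume x: "x \<in> {0..<1}" and y: "y \<in> {0..<1}" and e: "\<sigma> x = \<sigma> y"
    show "x = y"
    proof (cases "x * 2 \<le> 1"; cases "y * 2 \<le> 1")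
      assume "x * 2 \<le> 1" "y * 2 \<le> 1" then show ?thesis using e bA by (simp add: \<sigma>_def)
    next
      assume "\<not> x * 2 \<le> 1" "\<not> y * 2 \<le> 1" then show ?thesis using e bB by (simp add: \<sigma>_def)
    next
      assume "x * 2 \<le> 1" "\<not> y * 2 \<le> 1"
      then show ?thesis using br1[of x] br2[of y] x y e t by auto
    next
      assume "\<not> x * 2 \<le> 1" "y * 2 \<le> 1"
      then show ?thesis using br1[of y] br2[of x] x y e t by auto
    qed
  qed
  have e: "I 0 = I 1" using C01 by (simp add: I_def joinpaths_def subpath_def)
  have good: "(\<exists>\<beta>>0. Rd I s = complex_of_real \<beta> * Rd C (\<sigma> s)) \<and> (smooth C (\<sigma> s) \<longrightarrow> smooth I s)"
    if s: "s \<in> {0..<1}" "s' \<in> {0..<1}" "s' \<noteq> s" "I s' = I s" for s s'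
  proof -
    consider "s = 0" | "0 < s" "s * 2 < 1" | "s * 2 = 1" | "1 < s * 2" using s(1) by fastforce
    then show ?thesis
    proof cases
      case 3
      then have sh: "s = 1/2" by simp
      have a: "\<sigma> s' \<in> {0..<1}" "I s' = C (\<sigma> s')" using sig[OF s(2)] by auto
      have ss: "\<sigma> s = t" "s \<in> {0..<1}" using sh by (auto simp: \<sigma>_def)
      have "\<sigma> s' \<noteq> t" using inj s ss by (metis inj_onD)
      moreover have "\<sigma> s' \<noteq> t'"
        using br1[of s'] br2[of s'] s(2) t by (cases "s' * 2 \<le> 1") auto
      moreover have "C (\<sigma> s') = C t"
      proof -
        have "C (\<sigma> s') = I s'" using a(2) by simp
        also have "\<dots> = I s" using s(4) by simp
        also have "\<dots> = C t" using sig[OF ss(2)] ss(1) by simp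
        finally show ?thesis .
      qed
      moreover have "t = t' \<or> t' = \<sigma> s' \<or> t = \<sigma> s'"
        by (rule C3) (use t a(1) ct calculation(3) in auto)
      ultimately have False using t by auto
      then show ?thesis ..
    next
      case 2
      have eq2: "\<sigma> s = 0 + (2 * t) * s" using 2 by (simp add: \<sigma>_def)
      have "0 < (2 * t) * s" using 2 bA by simp
      moreover have "\<sigma> s \<le> t" using br1[of s] 2 by auto
      ultimately have sr: "0 < \<sigma> s" "\<sigma> s < 1" using t eq2 by linarith+
      have fcA': "\<forall>y\<in>{0..1/2}. I y = C (0 + (2 * t) * y)" by (rule fcA)
      have "(\<exists>\<beta>>0. Rd I s = complex_of_real \<beta> * Rd C (0 + (2 * t) * s)) \<and> (smooth C (0 + (2 * t) * s) \<longrightarrow> smooth I s)"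
        by (rule good_interior[OF _ _ _ bA fcA'])
          (use 2 vp_right[OF ps] vp_left[OF ps] sr in \<open>auto simp: \<sigma>_def\<close>)
      moreover have "\<sigma> s = 0 + (2 * t) * s" using 2 by (simp add: \<sigma>_def)
      ultimately show ?thesis by simp
    next
      case 4
      have sr: "0 < \<sigma> s" "\<sigma> s < 1" using br2[of s] 4 s(1) t by auto
      have "(\<exists>\<beta>>0. Rd I s = complex_of_real \<beta> * Rd C ((2 * t' - 1) + (2 * (1 - t')) * s)) \<and>
          (smooth C ((2 * t' - 1) + (2 * (1 - t')) * s) \<longrightarrow> smooth I s)"
        by (rule good_interior[OF _ _ _ bB fcB])
          (use 4 s(1) vp_right[OF ps] vp_left[OF ps] sr in \<open>auto simp: \<sigma>_def\<close>)
      moreover have "\<sigma> s = (2 * t' - 1) + (2 * (1 - t')) * s" using 4 by (simp add: \<sigma>_def)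
      ultimately show ?thesis by simp
    next
      case 1
      obtain D0 where D0: "(C has_vector_derivative D0) (at_right (0 + (2 * t) * 0))"
        using vp_right[OF ps, of 0] by auto
      obtain D1 where D1: "(C has_vector_derivative D1) (at_left ((2 * t' - 1) + (2 * (1 - t')) * 1))"
        using vp_left[OF ps, of 1] by (auto simp: algebra_simps)
      have R: "Rd I 0 = complex_of_real (2 * t) * Rd C 0"
        using Rd_affine[of 0 "1/2" "2 * t" I C 0 D0] bA fcA D0 by simp
      have L: "Ld I 1 = complex_of_real (2 * (1 - t')) * Ld C 1"
        using Ld_affine[of "1/2" 1 "2 * (1 - t')" I C "2 * t' - 1" D1] bB fcB D1 by (simp add: algebra_simps)
      have s00: "\<sigma> 0 = 0" by (simp add: \<sigma>_def)
      have "smooth I 0" if sC: "smooth C 0"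
      proof -
        obtain r where r: "r > 0" "Ld C 1 = complex_of_real r * Rd C 0"
          using sC unfolding smooth_def by auto
        have "\<exists>r'>0. Ld I 1 = complex_of_real r' * Rd I 0"
          by (rule smooth_tr[OF L R bB bA r(2) r(1)])
        then show ?thesis unfolding smooth_def by simp
      qed
      moreover have "\<exists>\<beta>>0. Rd I 0 = complex_of_real \<beta> * Rd C 0" using R bA by blast
      ultimately show ?thesis using 1 s00 by simp
    qed
  qed
  have vI: "\<exists>ps. valid_partition I ps" using v by (simp add: I_def)
  show ?thesis using Inv_transfer[OF C vI e sig inj good] unfolding I_def .
qed


lemma cs2: "X \<noteq> [] \<Longrightarrow> Y \<noteq> [] \<Longrightarrow>
  cs F (X @ Y) = F (last Y) (hd X) + ls F X + F (last X) (hd Y) + ls F Y"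
  by (simp add: cs_def ls_append)

lemma cs3: "X \<noteq> [] \<Longrightarrow> Y \<noteq> [] \<Longrightarrow> Z \<noteq> [] \<Longrightarrow>
  cs F (X @ Y @ Z) = F (last Z) (hd X) + ls F X + F (last X) (hd Y) + ls F Y + F (last Y) (hd Z) + ls F Z"
  by (simp add: cs_def ls_append)

lemma pcs_ends:
  assumes "2 \<le> length zs"
  shows "pcs zs \<noteq> []" "fst (hd (pcs zs)) = hd zs" "snd (last (pcs zs)) = last zs"
proof -
  obtain a b r where z: "zs = a # b # r" using assms by (cases zs; cases "tl zs") auto
  show "pcs zs \<noteq> []" "fst (hd (pcs zs)) = hd zs" using z by auto
  show "snd (last (pcs zs)) = last zs"
  proof -
    define n where "n = length zs"
    have n2: "2 \<le> n" using assms n_def by simp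
    have ne: "pcs zs \<noteq> []" using z by simp
    have "last (pcs zs) = pcs zs ! (n - 2)" using ne n2 by (simp add: last_conv_nth n_def numeral_2_eq_2)
    also have "\<dots> = (zs ! (n - 2), zs ! Suc (n - 2))" using n2 by (intro pcs_nth) (simp add: n_def)
    finally have "snd (last (pcs zs)) = zs ! Suc (n - 2)" by simp
    moreover have "Suc (n - 2) = n - 1" using n2 by simp
    moreover have "last zs = zs ! (n - 1)" using z by (simp add: last_conv_nth n_def)
    ultimately show ?thesis by simp
  qed
qed

lemma split_step:
  assumes C: "Inv C" and si: "self_int C t t'"
  shows "rot C = rot (direct_split C t t') + rot (indirect_split C t t') \<and> Inv (indirect_split C t t')"
proof -
  have t0: "0 \<le> t" and tt: "t < t'" and t1: "t' \<le> 1" and ct: "C t = C t'" and nn: "\<not> (t = 0 \<and> t' = 1)"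
    using si unfolding self_int_def by auto
  obtain ps0 where ps0: "valid_partition C ps0" and C01: "C 0 = C 1"
    and C4: "\<And>x y. x\<in>{0..<1} \<Longrightarrow> y\<in>{0..<1} \<Longrightarrow> x \<noteq> y \<Longrightarrow> C x = C y \<Longrightarrow> smooth C x \<and> Im (cnj (Rd C x) * Rd C y) \<noteq> 0"
    using C unfolding Inv_def by blast
  obtain ps where ps: "valid_partition C ps" "set ps = set ps0 \<union> ({t, t'} \<inter> {0<..<1})"
    using refine_set[OF ps0, of "{t, t'} \<inter> {0<..<1}"] by auto
  have vs: "0 \<in> set ps0" "1 \<in> set ps0" using valid_set[OF ps0] by auto
  have tin1: "t \<in> set ps"
  proof (cases "t = 0")
    case True then show ?thesis using ps(2) vs by simp
  next
    case False then have "t \<in> {0<..<1}" using t0 tt t1 by auto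
    then show ?thesis using ps(2) by simp
  qed
  have tin2: "t' \<in> set ps"
  proof (cases "t' = 1")
    case True then show ?thesis using ps(2) vs by simp
  next
    case False then have "t' \<in> {0<..<1}" using t0 tt t1 by auto
    then show ?thesis using ps(2) by simp
  qed
  note tin = tin1 tin2
  have V: "2 \<le> length ps" "hd ps = 0" "last ps = 1" "sorted_wrt (<) ps"
    "\<forall>P\<in>set (pcs ps). piece_regular C (fst P) (snd P)"
    using ps(1) unfolding valid_pcs by auto
  obtain xs zs where xz: "ps = xs @ t # zs" using tin(1) by (metis split_list)
  have "t' \<in> set zs"
  proof -
    have "t' \<notin> set xs" using V(4) tt unfolding xz by (auto simp: sorted_wrt_append)
    then show ?thesis using tin(2) tt xz by auto
  qed
  then obtain ms ys where zs: "zs = ms @ t' # ys" by (metis split_list)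
  have psd: "ps = xs @ t # ms @ t' # ys" using xz zs by simp
  have srt: "sorted_wrt (<) (xs @ t # ms @ t' # ys)" using V(4) psd by simp
  have a: "sorted_wrt (<) xs" and b: "\<forall>x\<in>set xs. \<forall>y\<in>set (t # ms @ t' # ys). x < y"
    and c: "sorted_wrt (<) (t # ms @ t' # ys)"
    using srt unfolding sorted_wrt_append by blast+
  have c1: "\<forall>y\<in>set (ms @ t' # ys). t < y" and c2: "sorted_wrt (<) (ms @ t' # ys)"
    using c by simp_all
  have d1: "sorted_wrt (<) ms" and d2: "\<forall>x\<in>set ms. \<forall>y\<in>set (t' # ys). x < y"
    and d3: "sorted_wrt (<) (t' # ys)"
    using c2 unfolding sorted_wrt_append by blast+
  have sA: "sorted_wrt (<) (xs @ [t])" using a b unfolding sorted_wrt_append by simp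
  have sB: "sorted_wrt (<) (t # ms @ [t'])" using c1 d1 d2 by (simp add: sorted_wrt_append)
  have sC: "sorted_wrt (<) (t' # ys)" by (rule d3)
  define LA where "LA = pcs (xs @ [t])"
  define LB where "LB = pcs (t # ms @ [t'])"
  define LC where "LC = pcs (t' # ys)"
  have pps: "pcs ps = LA @ LB @ LC"
  proof -
    have "pcs ps = pcs (xs @ [t]) @ pcs (t # ms @ t' # ys)" unfolding psd by (rule pcs_append)
    moreover have "pcs (t # ms @ t' # ys) = pcs (t # ms @ [t']) @ pcs (t' # ys)"
      using pcs_append[of "t # ms" t' ys] by simp
    ultimately show ?thesis by (simp add: LA_def LB_def LC_def)
  qed
  have prA: "\<forall>P\<in>set LA. piece_regular C (fst P) (snd P)"
   and prB: "\<forall>P\<in>set LB. piece_regular C (fst P) (snd P)"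
   and prC: "\<forall>P\<in>set LC. piece_regular C (fst P) (snd P)"
    using V(5) unfolding pps set_append by blast+
  have x0: "xs = [] \<longleftrightarrow> t = 0"
  proof
    assume "xs = []" then show "t = 0" using V(2) psd by simp
  next
    assume "t = 0" show "xs = []"
    proof (rule ccontr)
      assume "xs \<noteq> []"
      then have "hd xs < t" using b by simp
      moreover have "hd ps = hd xs" using psd \<open>xs \<noteq> []\<close> by simp
      ultimately show False using V(2) \<open>t = 0\<close> by simp
    qed
  qed
  have y1: "ys = [] \<longleftrightarrow> t' = 1"
  proof
    assume "ys = []" then show "t' = 1" using V(3) psd by simp
  next
    assume "t' = 1" show "ys = []"
    proof (rule ccontr)
      assume "ys \<noteq> []"
      then have "t' < last ys" using sC by simp
      moreover have "last ps = last ys" using psd \<open>ys \<noteq> []\<close> by simp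
      ultimately show False using V(3) \<open>t' = 1\<close> by simp
    qed
  qed
  have lenB: "2 \<le> length (t # ms @ [t'])" by simp
  have rD: "rot (direct_split C t t') = cs (FF C) LB"
    unfolding direct_split_def LB_def by (rule rot_subpath(2)[OF sB lenB]) (use prB LB_def in auto)
  note eB = pcs_ends[OF lenB, folded LB_def]
  define A where "A x y = Arg (Rd C x / Ld C y)" for x y
  have FFe: "FF C P Q = WW C (fst Q) (snd Q) + A (fst Q) (snd P) / (2 * pi)" for P Q
    by (simp add: FF_def A_def)
  consider (c1) "t = 0" | (c2) "t' = 1" | (c3) "0 < t" "t' < 1" using nn t0 t1 by linarith
  then show ?thesis
  proof cases
    case c1
    then have t'1: "t' < 1" and yne: "ys \<noteq> []" and xe: "xs = []" using nn x0 y1 t1 by auto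
    have I: "indirect_split C t t' = subpath t' 1 C" using c1 by (simp add: indirect_split_def)
    have lenC: "2 \<le> length (t' # ys)" using yne by (cases ys) auto
    have lC: "last (t' # ys) = 1" using V(3) psd yne by simp
    note RC = rot_subpath[OF sC lenC _ _ lC, folded LC_def, OF prC]
    note eC = pcs_ends[OF lenC, folded LC_def]
    have LAe: "LA = []" using xe by (simp add: LA_def)
    have rC: "rot C = cs (FF C) (LB @ LC)" using rot_eq[OF ps(1)] turning_cs[OF V(4,1)] pps LAe by simp
    have sm0: "smooth C 0" and tr: "Im (cnj (Rd C 0) * Rd C t') \<noteq> 0"
      using C4[of 0 t'] c1 ct tt t'1 by auto
    have smt': "smooth C t'" using C4[of t' 0] c1 ct tt t'1 by auto
    obtain r where r: "r > 0" "Ld C 1 = complex_of_real r * Rd C 0" using sm0 unfolding smooth_def by auto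
    obtain r' where r': "r' > 0" "Ld C t' = complex_of_real r' * Rd C t'" using smt' tt c1 unfolding smooth_def by auto
    have key: "A 0 1 + A t' t' = A 0 t' + A t' 1"
      unfolding A_def by (rule arg_id[OF tr r(2) r'(2) r(1) r'(1)])
    have hB: "fst (hd LB) = t" and lB: "snd (last LB) = t'" using eB by auto
    have hC: "fst (hd LC) = t'" and lCC: "snd (last LC) = 1" using eC lC by auto
    have key': "A 0 1 / (2 * pi) + A t' t' / (2 * pi) = A 0 t' / (2 * pi) + A t' 1 / (2 * pi)"
      using key unfolding add_divide_distrib[symmetric] by simp
    have e4: "FF C (last LC) (hd LB) + FF C (last LB) (hd LC) = FF C (last LB) (hd LB) + FF C (last LC) (hd LC)"
      unfolding FFe hB lB hC lCC c1 using key' c1 by linarith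
    have "rot C = cs (FF C) LB + cs (FF C) LC"
      unfolding rC cs2[OF eB(1) eC(1)] using e4 unfolding cs_def by linarith
    moreover have "Inv (subpath t' 1 C)"
      by (rule Inv_sub1[OF C _ t'1]) (use RC(1) tt c1 ct in auto)
    ultimately show ?thesis using rD RC(2) I by simp
  next
    case c2
    then have t0': "0 < t" and xne: "xs \<noteq> []" and ye: "ys = []" using nn x0 y1 tt t0 by auto
    have I: "indirect_split C t t' = subpath 0 t C" using c2 t0' by (simp add: indirect_split_def)
    have lenA: "2 \<le> length (xs @ [t])" using xne by (cases xs) auto
    have hA: "hd (xs @ [t]) = 0" using V(2) psd xne by simp
    note RA = rot_subpath[OF sA lenA _ hA, folded LA_def, OF prA]
    note eA = pcs_ends[OF lenA, folded LA_def]
    have LCe: "LC = []" using ye by (simp add: LC_def)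
    have rC: "rot C = cs (FF C) (LA @ LB)" using rot_eq[OF ps(1)] turning_cs[OF V(4,1)] pps LCe by simp
    have c0: "C t = C 0" using ct c2 C01 by simp
    have tr: "Im (cnj (Rd C t) * Rd C 0) \<noteq> 0" and smt: "smooth C t"
      using C4[of t 0] c0 t0' tt c2 by auto
    have sm0: "smooth C 0" using C4[of 0 t] c0 t0' tt c2 by auto
    obtain r where r: "r > 0" "Ld C 1 = complex_of_real r * Rd C 0" using sm0 unfolding smooth_def by auto
    obtain r' where r': "r' > 0" "Ld C t = complex_of_real r' * Rd C t" using smt t0' unfolding smooth_def by auto
    have key: "A t t + A 0 1 = A t 1 + A 0 t"
      unfolding A_def by (rule arg_id[OF tr r'(2) r(2) r'(1) r(1)])
    have hB: "fst (hd LB) = t" and lB: "snd (last LB) = t'" using eB by auto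
    have hAA: "fst (hd LA) = 0" and lA: "snd (last LA) = t" using eA hA by auto
    have key': "A t t / (2 * pi) + A 0 1 / (2 * pi) = A t 1 / (2 * pi) + A 0 t / (2 * pi)"
      using key unfolding add_divide_distrib[symmetric] by simp
    have e4: "FF C (last LB) (hd LA) + FF C (last LA) (hd LB) = FF C (last LA) (hd LA) + FF C (last LB) (hd LB)"
      unfolding FFe hB lB hAA lA c2 using key' c2 by linarith
    have "rot C = cs (FF C) LB + cs (FF C) LA"
      unfolding rC cs2[OF eA(1) eB(1)] using e4 unfolding cs_def by linarith
    moreover have "Inv (subpath 0 t C)"
      by (rule Inv_sub2[OF C t0']) (use RA(1) tt c2 c0 in auto)
    ultimately show ?thesis using rD RA(2) I by simp
  next
    case c3
    then have xne: "xs \<noteq> []" and yne: "ys \<noteq> []" using x0 y1 by auto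
    have I: "indirect_split C t t' = subpath 0 t C +++ subpath t' 1 C" using c3 by (simp add: indirect_split_def)
    have lenA: "2 \<le> length (xs @ [t])" using xne by (cases xs) auto
    have lenC: "2 \<le> length (t' # ys)" using yne by (cases ys) auto
    have h0: "hd xs = 0" using V(2) psd xne by simp
    have l1: "last ys = 1" using V(3) psd yne by simp
    note RJ = rot_join[OF sA sC xne yne h0 l1 prA[unfolded LA_def] prC[unfolded LC_def] ct c3(1) tt c3(2), folded LA_def LC_def]
    note eA = pcs_ends[OF lenA, folded LA_def]
    note eC = pcs_ends[OF lenC, folded LC_def]
    have rC: "rot C = cs (FF C) (LA @ LB @ LC)" using rot_eq[OF ps(1)] turning_cs[OF V(4,1)] pps by simp
    have tr: "Im (cnj (Rd C t) * Rd C t') \<noteq> 0" and smt: "smooth C t"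
      using C4[of t t'] ct c3 tt by auto
    have smt': "smooth C t'" using C4[of t' t] ct c3 tt by auto
    obtain r where r: "r > 0" "Ld C t = complex_of_real r * Rd C t" using smt c3 unfolding smooth_def by auto
    obtain r' where r': "r' > 0" "Ld C t' = complex_of_real r' * Rd C t'" using smt' c3 tt unfolding smooth_def by auto
    have key: "A t t + A t' t' = A t t' + A t' t"
      unfolding A_def by (rule arg_id[OF tr r(2) r'(2) r(1) r'(1)])
    have hB: "fst (hd LB) = t" and lB: "snd (last LB) = t'" using eB by auto
    have lA: "snd (last LA) = t" using eA by auto
    have hC: "fst (hd LC) = t'" using eC by auto
    have key': "A t t / (2 * pi) + A t' t' / (2 * pi) = A t t' / (2 * pi) + A t' t / (2 * pi)"
      using key unfolding add_divide_distrib[symmetric] by simp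
    have e4: "FF C (last LA) (hd LB) + FF C (last LB) (hd LC) = FF C (last LB) (hd LB) + FF C (last LA) (hd LC)"
      unfolding FFe hB lB lA hC using key' by linarith
    have "rot C = cs (FF C) LB + cs (FF C) (LA @ LC)"
      unfolding rC cs3[OF eA(1) eB(1) eC(1)] cs2[OF eA(1) eC(1)] using e4 unfolding cs_def by linarith
    moreover have "Inv (subpath 0 t C +++ subpath t' 1 C)"
      by (rule Inv_join[OF C c3(1) tt c3(2) ct]) (use RJ(1) in auto)
    ultimately show ?thesis using rD RJ(2) I by simp
  qed
qed

lemma main_dsd: "dsd C \<Omega> \<Longrightarrow> Inv C \<Longrightarrow> rot C = (\<Sum>D\<leftarrow>\<Omega>. rot D)"
proof (induction rule: dsd.induct)
  case (last C) then show ?case by simp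
next
  case (step C t t' \<Omega>)
  have s: "rot C = rot (direct_split C t t') + rot (indirect_split C t t') \<and> Inv (indirect_split C t t')"
    by (rule split_step[OF step.prems step.hyps(1)])
  then show ?case using step.IH by simp
qed


theorem lemma5:
  fixes \<gamma> :: "real \<Rightarrow> complex" and \<Omega> :: "(real \<Rightarrow> complex) list"
  assumes "curve_C \<gamma>" and "dsd \<gamma> \<Omega>"
  shows "rot \<gamma> = (\<Sum>C\<leftarrow>\<Omega>. rot C)"
  using main_dsd[OF assms(2) Inv_base[OF assms(1)]] .

end
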